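(* Let $\Lambda$ be a row-finite $k$-graph with no sources and $R$ a commutative ring with $1$. For $(\alpha,\beta)\in\Lambda\times\Lambda$ with $s(\alpha)=s(\beta)$, the following are equivalent: (1) $s_{\alpha\gamma}s_{(\alpha\gamma)^*}=s_{\beta\gamma}s_{(\beta\gamma)^*}$ for all $\gamma\in s(\alpha)\Lambda$; (2) $s_\alpha s_{\beta^*}$ is normal (i.e. $aa^*=a^*a$ for $a=s_\alpha s_{\beta^*}$) and commutes with every element of $\mathcal{D}$; (3) $\alpha\gamma=\beta\gamma$ for all $\gamma\in s(\alpha)\Lambda^\infty$.
   Context: A $k$-graph is a countable category $\Lambda$ (objects $\Lambda^0$, vertices; morphisms, paths; range/source maps $r,s$) with a degree functor $d:\Lambda\to\mathbb{N}^k$ satisfying unique factorization: if $d(\lambda)=m+n$ there are unique $\mu,\nu$ with $s(\mu)=r(\nu)$, $d(\mu)=m$, $d(\nu)=n$, $\lambda=\mu\nu$. $\Lambda^n=d^{-1}(n)$, $v\Lambda=\{\lambda:r(\lambda)=v\}$, $v\Lambda^n=v\Lambda\cap\Lambda^n$. Row-finite with no sources: each $v\Lambda^n$ is finite and nonempty. ${\rm KP}_R(\Lambda)$ is the universal $R$-algebra generated by $p_v$ ($v\in\Lambda^0$) and $s_\lambda,s_{\lambda^*}$ ($d(\lambda)\neq0$) with relations (KP1) $p_v$ mutually orthogonal idempotents; (KP2) $s_\lambda s_\mu=s_{\lambda\mu}$, $s_{\mu^*}s_{\lambda^*}=s_{(\lambda\mu)^*}$, $p_{r(\lambda)}s_\lambda=s_\lambda=s_\lambda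 p_{s(\lambda)}$, $p_{s(\lambda)}s_{\lambda^*}=s_{\lambda^*}=s_{\lambda^*}p_{r(\lambda)}$ when $r(\mu)=s(\lambda)$; (KP3) $s_{\lambda^*}s_\mu=\delta_{\lambda,\mu}p_{s(\lambda)}$ when $d(\lambda)=d(\mu)$; (KP4) $p_v=\sum_{\lambda\in v\Lambda^n}s_\lambda s_{\lambda^*}$ for $n\neq0$. Convention $s_v=s_{v^*}=p_v$. ${\rm KP}_R(\Lambda)$ is spanned by $\{s_\mu s_{\nu^*}: s(\mu)=s(\nu)\}$ and carries the $R$-linear involution $a\mapsto a^*$ with $(s_\alpha s_{\beta^*})^*=s_\beta s_{\alpha^*}$. $\mathcal{D}$ is the $R$-subalgebra generated by $\{s_\mu s_{\mu^*}:\mu\in\Lambda\}$. Let $\Omega_k$ be the $k$-graph with objects $\mathbb{N}^k$, morphisms $\{(p,q): p\le q\}$, $r(p,q)=p$, $s(p,q)=q$, $(p,q)(q,t)=(p,t)$, $d(p,q)=q-p$. An infinite path is a degree-preserving functor $x:\Omega_k\to\Lambda$; $\Lambda^\infty$ is the set of infinite paths, $r(x)=x(0,0)$, and $v\Lambda^\infty=\{x: r(x)=v\}$. For $\alpha\in\Lambda$ and $x\in s(\alpha)\Lambda^\infty$, $\alpha x$ is the unique infinite path with $(\alpha x)(0,n)=\alpha\,x(0,n-d(\alpha))$ for all $n\ge d(\alpha)$. *)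

theory Defs
  imports Main "HOL-Library.Function_Algebras" "HOL-Library.Countable_Set"
begin

text \<open>Elements of N^k are functions nat => nat vanishing from index k on;
  addition, subtraction, 0 and the order are pointwise.\<close>
definition Nk :: "nat \<Rightarrow> (nat \<Rightarrow> nat) set" where
  "Nk k = {n. \<forall>i\<ge>k. n i = 0}"

text \<open>A small category with vertex set, path set, range, source, identities,
  composition (comp lam mu is defined when src lam = rng mu) and degree functor.\<close>
record ('v, 'a) kgraph =
  verts :: "'v set"
  paths :: "'a set"
  rng   :: "'a \<Rightarrow> 'v"
  src   :: "'a \<Rightarrow> 'v"
  ident :: "'v \<Rightarrow> 'a"
  comp  :: "'a \<Rightarrow> 'a \<Rightarrow> 'a"
  deg   :: "'a \<Rightarrow> (nat \<Rightarrow> nat)"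

definition is_kgraph :: "nat \<Rightarrow> ('v, 'a) kgraph \<Rightarrow> bool" where
  "is_kgraph k G \<longleftrightarrow>
     countable (verts G) \<and> countable (paths G) \<and>
     (\<forall>l\<in>paths G. rng G l \<in> verts G \<and> src G l \<in> verts G \<and> deg G l \<in> Nk k) \<and>
     (\<forall>v\<in>verts G. ident G v \<in> paths G \<and> rng G (ident G v) = v \<and> src G (ident G v) = v
                    \<and> deg G (ident G v) = 0) \<and>
     (\<forall>l\<in>paths G. comp G (ident G (rng G l)) l = l \<and> comp G l (ident G (src G l)) = l) \<and>
     (\<forall>l\<in>paths G. \<forall>m\<in>paths G. src G l = rng G m \<longrightarrow>
         comp G l m \<in> paths G \<and> rng G (comp G l m) = rng G l \<and> src G (comp G l m) = src G m
         \<and> deg G (comp G l m) = deg G l + deg G m) \<and>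
     (\<forall>l\<in>paths G. \<forall>m\<in>paths G. \<forall>n\<in>paths G. src G l = rng G m \<longrightarrow> src G m = rng G n \<longrightarrow>
         comp G (comp G l m) n = comp G l (comp G m n)) \<and>
     (\<forall>l\<in>paths G. \<forall>m\<in>Nk k. \<forall>n\<in>Nk k. deg G l = m + n \<longrightarrow>
         (\<exists>!(mu, nu). mu \<in> paths G \<and> nu \<in> paths G \<and> src G mu = rng G nu \<and>
                     deg G mu = m \<and> deg G nu = n \<and> l = comp G mu nu))"

definition row_finite_no_sources :: "nat \<Rightarrow> ('v, 'a) kgraph \<Rightarrow> bool" where
  "row_finite_no_sources k G \<longleftrightarrow>
     (\<forall>v\<in>verts G. \<forall>n\<in>Nk k.
        finite {l\<in>paths G. rng G l = v \<and> deg G l = n} \<and>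
        {l\<in>paths G. rng G l = v \<and> deg G l = n} \<noteq> {})"

datatype ('v, 'a) kpgen = Pv 'v | Sg 'a | Ss 'a

text \<open>Terms of the free (non-unital, associative) R-algebra on the generators.\<close>
datatype ('g, 'r) fterm =
    TZero | TGen 'g | TAdd "('g, 'r) fterm" "('g, 'r) fterm" | TNeg "('g, 'r) fterm"
  | TMul "('g, 'r) fterm" "('g, 'r) fterm" | TSmul 'r "('g, 'r) fterm"

type_synonym ('v, 'a, 'r) kpterm = "(('v, 'a) kpgen, 'r) fterm"

text \<open>s_lambda and s_{lambda^*}, with the convention s_v = s_{v^*} = p_v for degree-0 paths
  (which are exactly the identities v).\<close>
definition sT :: "('v, 'a) kgraph \<Rightarrow> 'a \<Rightarrow> ('v, 'a, 'r) kpterm" where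
  "sT G l = (if deg G l = 0 then TGen (Pv (src G l)) else TGen (Sg l))"

definition sstT :: "('v, 'a) kgraph \<Rightarrow> 'a \<Rightarrow> ('v, 'a, 'r) kpterm" where
  "sstT G l = (if deg G l = 0 then TGen (Pv (src G l)) else TGen (Ss l))"

definition pT :: "'v \<Rightarrow> ('v, 'a, 'r) kpterm" where
  "pT v = TGen (Pv v)"

fun tsum_list :: "('g, 'r) fterm list \<Rightarrow> ('g, 'r) fterm" where
  "tsum_list [] = TZero"
| "tsum_list (t # ts) = TAdd t (tsum_list ts)"

text \<open>Equality in KP_R(Lambda): the smallest congruence on terms containing the axioms
  of an associative R-algebra and the relations (KP1)-(KP4).\<close>
inductive kp_eq :: "nat \<Rightarrow> ('v, 'a) kgraph \<Rightarrow> ('v, 'a, 'r::comm_ring_1) kpterm \<Rightarrow> ('v, 'a, 'r) kpterm \<Rightarrow> bool"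
  for k :: nat and G :: "('v, 'a) kgraph" where
  refl: "kp_eq k G a a"
| sym: "kp_eq k G a b \<Longrightarrow> kp_eq k G b a"
| trans: "kp_eq k G a b \<Longrightarrow> kp_eq k G b c \<Longrightarrow> kp_eq k G a c"
| cong_add: "kp_eq k G a a' \<Longrightarrow> kp_eq k G b b' \<Longrightarrow> kp_eq k G (TAdd a b) (TAdd a' b')"
| cong_neg: "kp_eq k G a a' \<Longrightarrow> kp_eq k G (TNeg a) (TNeg a')"
| cong_mul: "kp_eq k G a a' \<Longrightarrow> kp_eq k G b b' \<Longrightarrow> kp_eq k G (TMul a b) (TMul a' b')"
| cong_smul: "kp_eq k G a a' \<Longrightarrow> kp_eq k G (TSmul r a) (TSmul r a')"
| add_assoc: "kp_eq k G (TAdd (TAdd a b) c) (TAdd a (TAdd b c))"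
| add_comm: "kp_eq k G (TAdd a b) (TAdd b a)"
| add_zero: "kp_eq k G (TAdd a TZero) a"
| add_neg: "kp_eq k G (TAdd a (TNeg a)) TZero"
| mul_assoc: "kp_eq k G (TMul (TMul a b) c) (TMul a (TMul b c))"
| distrib_l: "kp_eq k G (TMul a (TAdd b c)) (TAdd (TMul a b) (TMul a c))"
| distrib_r: "kp_eq k G (TMul (TAdd a b) c) (TAdd (TMul a c) (TMul b c))"
| smul_add: "kp_eq k G (TSmul r (TAdd a b)) (TAdd (TSmul r a) (TSmul r b))"
| add_smul: "kp_eq k G (TSmul (r + r') a) (TAdd (TSmul r a) (TSmul r' a))"
| smul_smul: "kp_eq k G (TSmul (r * r') a) (TSmul r (TSmul r' a))"
| one_smul: "kp_eq k G (TSmul 1 a) a"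
| smul_mul_l: "kp_eq k G (TSmul r (TMul a b)) (TMul (TSmul r a) b)"
| smul_mul_r: "kp_eq k G (TSmul r (TMul a b)) (TMul a (TSmul r b))"
| KP1_idem: "v \<in> verts G \<Longrightarrow> kp_eq k G (TMul (pT v) (pT v)) (pT v)"
| KP1_orth: "v \<in> verts G \<Longrightarrow> w \<in> verts G \<Longrightarrow> v \<noteq> w \<Longrightarrow> kp_eq k G (TMul (pT v) (pT w)) TZero"
| KP2_s: "l \<in> paths G \<Longrightarrow> m \<in> paths G \<Longrightarrow> deg G l \<noteq> 0 \<Longrightarrow> deg G m \<noteq> 0 \<Longrightarrow> rng G m = src G l \<Longrightarrow>
           kp_eq k G (TMul (sT G l) (sT G m)) (sT G (comp G l m))"
| KP2_sst: "l \<in> paths G \<Longrightarrow> m \<in> paths G \<Longrightarrow> deg G l \<noteq> 0 \<Longrightarrow> deg G m \<noteq> 0 \<Longrightarrow> rng G m = src G l \<Longrightarrow>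
           kp_eq k G (TMul (sstT G m) (sstT G l)) (sstT G (comp G l m))"
| KP2_pr_s: "l \<in> paths G \<Longrightarrow> deg G l \<noteq> 0 \<Longrightarrow> kp_eq k G (TMul (pT (rng G l)) (sT G l)) (sT G l)"
| KP2_s_ps: "l \<in> paths G \<Longrightarrow> deg G l \<noteq> 0 \<Longrightarrow> kp_eq k G (TMul (sT G l) (pT (src G l))) (sT G l)"
| KP2_ps_sst: "l \<in> paths G \<Longrightarrow> deg G l \<noteq> 0 \<Longrightarrow> kp_eq k G (TMul (pT (src G l)) (sstT G l)) (sstT G l)"
| KP2_sst_pr: "l \<in> paths G \<Longrightarrow> deg G l \<noteq> 0 \<Longrightarrow> kp_eq k G (TMul (sstT G l) (pT (rng G l))) (sstT G l)"
| KP3: "l \<in> paths G \<Longrightarrow> m \<in> paths G \<Longrightarrow> deg G l \<noteq> 0 \<Longrightarrow> deg G l = deg G m \<Longrightarrow>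
           kp_eq k G (TMul (sstT G l) (sT G m)) (if l = m then pT (src G l) else TZero)"
| KP4: "v \<in> verts G \<Longrightarrow> n \<in> Nk k \<Longrightarrow> n \<noteq> 0 \<Longrightarrow> distinct xs \<Longrightarrow>
           set xs = {l\<in>paths G. rng G l = v \<and> deg G l = n} \<Longrightarrow>
           kp_eq k G (pT v) (tsum_list (map (\<lambda>l. TMul (sT G l) (sstT G l)) xs))"

fun kp_star :: "('v, 'a, 'r) kpterm \<Rightarrow> ('v, 'a, 'r) kpterm" where
  "kp_star TZero = TZero"
| "kp_star (TGen (Pv v)) = TGen (Pv v)"
| "kp_star (TGen (Sg l)) = TGen (Ss l)"
| "kp_star (TGen (Ss l)) = TGen (Sg l)"
| "kp_star (TAdd a b) = TAdd (kp_star a) (kp_star b)"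
| "kp_star (TNeg a) = TNeg (kp_star a)"
| "kp_star (TMul a b) = TMul (kp_star b) (kp_star a)"
| "kp_star (TSmul r a) = TSmul r (kp_star a)"

text \<open>Representing terms of the subalgebra D generated by the s_mu s_{mu^*}.\<close>
inductive_set kp_D :: "('v, 'a) kgraph \<Rightarrow> ('v, 'a, 'r) kpterm set" for G :: "('v, 'a) kgraph" where
  gen: "m \<in> paths G \<Longrightarrow> TMul (sT G m) (sstT G m) \<in> kp_D G"
| zero: "TZero \<in> kp_D G"
| add: "a \<in> kp_D G \<Longrightarrow> b \<in> kp_D G \<Longrightarrow> TAdd a b \<in> kp_D G"
| neg: "a \<in> kp_D G \<Longrightarrow> TNeg a \<in> kp_D G"
| mul: "a \<in> kp_D G \<Longrightarrow> b \<in> kp_D G \<Longrightarrow> TMul a b \<in> kp_D G"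
| smul: "a \<in> kp_D G \<Longrightarrow> TSmul r a \<in> kp_D G"

text \<open>A degree-preserving functor from Omega_k; only its values on morphisms (p,q), p <= q in N^k,
  are meaningful.\<close>
definition inf_path :: "nat \<Rightarrow> ('v, 'a) kgraph \<Rightarrow> ((nat \<Rightarrow> nat) \<Rightarrow> (nat \<Rightarrow> nat) \<Rightarrow> 'a) \<Rightarrow> bool" where
  "inf_path k G x \<longleftrightarrow>
     (\<forall>p\<in>Nk k. x p p \<in> ident G ` verts G) \<and>
     (\<forall>p\<in>Nk k. \<forall>q\<in>Nk k. p \<le> q \<longrightarrow> x p q \<in> paths G \<and> deg G (x p q) = q - p) \<and>
     (\<forall>p\<in>Nk k. \<forall>q\<in>Nk k. \<forall>t\<in>Nk k. p \<le> q \<longrightarrow> q \<le> t \<longrightarrow>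
         src G (x p q) = rng G (x q t) \<and> comp G (x p q) (x q t) = x p t)"

definition inf_rng :: "('v, 'a) kgraph \<Rightarrow> ((nat \<Rightarrow> nat) \<Rightarrow> (nat \<Rightarrow> nat) \<Rightarrow> 'a) \<Rightarrow> 'v" where
  "inf_rng G x = rng G (x 0 0)"

definition inf_eq :: "nat \<Rightarrow> ((nat \<Rightarrow> nat) \<Rightarrow> (nat \<Rightarrow> nat) \<Rightarrow> 'a) \<Rightarrow> ((nat \<Rightarrow> nat) \<Rightarrow> (nat \<Rightarrow> nat) \<Rightarrow> 'a) \<Rightarrow> bool" where
  "inf_eq k y z \<longleftrightarrow> (\<forall>p\<in>Nk k. \<forall>q\<in>Nk k. p \<le> q \<longrightarrow> y p q = z p q)"

text \<open>alpha x: the (unique up to inf_eq) infinite path with (alpha x)(0,n) = alpha x(0, n - d(alpha)).\<close>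
definition inf_concat :: "nat \<Rightarrow> ('v, 'a) kgraph \<Rightarrow> 'a \<Rightarrow> ((nat \<Rightarrow> nat) \<Rightarrow> (nat \<Rightarrow> nat) \<Rightarrow> 'a)
                          \<Rightarrow> ((nat \<Rightarrow> nat) \<Rightarrow> (nat \<Rightarrow> nat) \<Rightarrow> 'a)" where
  "inf_concat k G a x = (SOME y. inf_path k G y \<and>
      (\<forall>n\<in>Nk k. deg G a \<le> n \<longrightarrow> y 0 n = comp G a (x 0 (n - deg G a))))"

end

theory Submission
  imports Defs
begin


lemma Nk_0[simp]: "0 \<in> Nk k" by (simp add: Nk_def)
lemma Nk_add[intro]: "a \<in> Nk k \<Longrightarrow> b \<in> Nk k \<Longrightarrow> a + b \<in> Nk k" by (simp add: Nk_def)
lemma Nk_diff[intro]: "a \<in> Nk k \<Longrightarrow> a - b \<in> Nk k" by (simp add: Nk_def)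
lemma Nk_le: "b \<le> a \<Longrightarrow> a \<in> Nk k \<Longrightarrow> b \<in> Nk k"
  unfolding Nk_def le_fun_def by (simp, metis le_zero_eq)

lemma fa_add_diff: "(p::nat\<Rightarrow>nat) \<le> q \<Longrightarrow> p + (q - p) = q" by (auto simp: le_fun_def fun_eq_iff)
lemma fa_add_diff2: "(p::nat\<Rightarrow>nat) + q - p = q" by (auto simp: fun_eq_iff)
lemma fa_le_add: "(p::nat\<Rightarrow>nat) \<le> p + q" by (auto simp: le_fun_def)
lemma fa_le_diff: assumes "(p::nat\<Rightarrow>nat) + q \<le> d" shows "q \<le> d - p"
proof (rule le_funI)
  fix x have "p x + q x \<le> d x" using le_funD[OF assms] by simp
  thus "q x \<le> (d - p) x" by simp
qed
lemma fa_le_diff2: assumes "(p::nat\<Rightarrow>nat) \<le> a + b" shows "p - a \<le> b"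
proof (rule le_funI)
  fix x have "p x \<le> a x + b x" using le_funD[OF assms] by simp
  thus "(p - a) x \<le> b x" by simp
qed
lemma fa_le_add2: "(q::nat\<Rightarrow>nat) \<le> p + q" by (auto simp: le_fun_def)

locale kg =
  fixes k :: nat and G :: "('v, 'a) kgraph"
  assumes kg: "is_kgraph k G" and rf: "row_finite_no_sources k G"
begin

lemmas kgD = kg[unfolded is_kgraph_def]
lemma kg_paths: "\<forall>l\<in>paths G. rng G l \<in> verts G \<and> src G l \<in> verts G \<and> deg G l \<in> Nk k"
  using kgD by (elim conjE)
lemma kg_ident: "\<forall>v\<in>verts G. ident G v \<in> paths G \<and> rng G (ident G v) = v \<and> src G (ident G v) = v
                    \<and> deg G (ident G v) = 0"
  using kgD by (elim conjE)
lemma kg_idc: "\<forall>l\<in>paths G. comp G (ident G (rng G l)) l = l \<and> comp G l (ident G (src G l)) = l"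
  using kgD by (elim conjE)
lemma kg_comp: "\<forall>l\<in>paths G. \<forall>m\<in>paths G. src G l = rng G m \<longrightarrow>
         comp G l m \<in> paths G \<and> rng G (comp G l m) = rng G l \<and> src G (comp G l m) = src G m
         \<and> deg G (comp G l m) = deg G l + deg G m"
  using kgD by (elim conjE)
lemma kg_assoc: "\<forall>l\<in>paths G. \<forall>m\<in>paths G. \<forall>n\<in>paths G. src G l = rng G m \<longrightarrow> src G m = rng G n \<longrightarrow>
         comp G (comp G l m) n = comp G l (comp G m n)"
  using kgD by (elim conjE)
lemma kg_uf: "\<forall>l\<in>paths G. \<forall>m\<in>Nk k. \<forall>n\<in>Nk k. deg G l = m + n \<longrightarrow>
         (\<exists>!(mu, nu). mu \<in> paths G \<and> nu \<in> paths G \<and> src G mu = rng G nu \<and>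
                     deg G mu = m \<and> deg G nu = n \<and> l = comp G mu nu)"
  using kgD by (elim conjE)

lemma rng_in: "l \<in> paths G \<Longrightarrow> rng G l \<in> verts G" using kg_paths by blast
lemma src_in: "l \<in> paths G \<Longrightarrow> src G l \<in> verts G" using kg_paths by blast
lemma deg_in: "l \<in> paths G \<Longrightarrow> deg G l \<in> Nk k" using kg_paths by blast
lemma ident_in: "v \<in> verts G \<Longrightarrow> ident G v \<in> paths G" using kg_ident by blast
lemma ident_rng[simp]: "v \<in> verts G \<Longrightarrow> rng G (ident G v) = v" using kg_ident by blast
lemma ident_src[simp]: "v \<in> verts G \<Longrightarrow> src G (ident G v) = v" using kg_ident by blast
lemma ident_deg[simp]: "v \<in> verts G \<Longrightarrow> deg G (ident G v) = 0" using kg_ident by blast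
lemma comp_id_l: "l \<in> paths G \<Longrightarrow> comp G (ident G (rng G l)) l = l" using kg_idc by blast
lemma comp_id_r: "l \<in> paths G \<Longrightarrow> comp G l (ident G (src G l)) = l" using kg_idc by blast
lemma comp_in: "l \<in> paths G \<Longrightarrow> m \<in> paths G \<Longrightarrow> src G l = rng G m \<Longrightarrow> comp G l m \<in> paths G"
  using kg_comp by blast
lemma comp_rng[simp]: "l \<in> paths G \<Longrightarrow> m \<in> paths G \<Longrightarrow> src G l = rng G m \<Longrightarrow> rng G (comp G l m) = rng G l"
  using kg_comp by blast
lemma comp_src[simp]: "l \<in> paths G \<Longrightarrow> m \<in> paths G \<Longrightarrow> src G l = rng G m \<Longrightarrow> src G (comp G l m) = src G m"
  using kg_comp by blast
lemma comp_deg[simp]: "l \<in> paths G \<Longrightarrow> m \<in> paths G \<Longrightarrow> src G l = rng G m \<Longrightarrow> deg G (comp G l m) = deg G l + deg G m"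
  using kg_comp by blast
lemma comp_assoc: "l \<in> paths G \<Longrightarrow> m \<in> paths G \<Longrightarrow> n \<in> paths G \<Longrightarrow> src G l = rng G m \<Longrightarrow> src G m = rng G n \<Longrightarrow>
   comp G (comp G l m) n = comp G l (comp G m n)"
  using kg_assoc by blast
lemma ufact: "l \<in> paths G \<Longrightarrow> m \<in> Nk k \<Longrightarrow> n \<in> Nk k \<Longrightarrow> deg G l = m + n \<Longrightarrow>
   (\<exists>!(mu, nu). mu \<in> paths G \<and> nu \<in> paths G \<and> src G mu = rng G nu \<and>
                     deg G mu = m \<and> deg G nu = n \<and> l = comp G mu nu)"
  using kg_uf by blast

definition FQ :: "'a \<Rightarrow> (nat\<Rightarrow>nat) \<Rightarrow> 'a \<times> 'a \<Rightarrow> bool" where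
  "FQ l p = (\<lambda>(mu, nu). mu \<in> paths G \<and> nu \<in> paths G \<and> src G mu = rng G nu \<and>
                     deg G mu = p \<and> deg G nu = deg G l - p \<and> l = comp G mu nu)"

definition pre :: "'a \<Rightarrow> (nat\<Rightarrow>nat) \<Rightarrow> 'a" where "pre l p = fst (The (FQ l p))"
definition suf :: "'a \<Rightarrow> (nat\<Rightarrow>nat) \<Rightarrow> 'a" where "suf l p = snd (The (FQ l p))"

lemma FQ_ex1: assumes "l \<in> paths G" "p \<le> deg G l" shows "\<exists>!x. FQ l p x"
proof -
  have dl: "deg G l \<in> Nk k" using deg_in assms by auto
  have 1: "p \<in> Nk k" using Nk_le assms dl by blast
  have 2: "deg G l - p \<in> Nk k" using dl by auto
  have 3: "deg G l = p + (deg G l - p)" using fa_add_diff[OF assms(2)] by simp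
  have "\<exists>!(mu, nu). mu \<in> paths G \<and> nu \<in> paths G \<and> src G mu = rng G nu \<and>
                     deg G mu = p \<and> deg G nu = deg G l - p \<and> l = comp G mu nu"
    by (rule ufact[OF assms(1) 1 2 3])
  thus ?thesis unfolding FQ_def .
qed

lemma fac: assumes "l \<in> paths G" "p \<le> deg G l"
  shows "pre l p \<in> paths G" "suf l p \<in> paths G" "src G (pre l p) = rng G (suf l p)"
    "deg G (pre l p) = p" "deg G (suf l p) = deg G l - p" "comp G (pre l p) (suf l p) = l"
proof -
  obtain mu nu where e: "The (FQ l p) = (mu, nu)" by (cases "The (FQ l p)")
  have "FQ l p (mu, nu)" using theI'[OF FQ_ex1[OF assms]] e by simp
  hence q: "mu \<in> paths G \<and> nu \<in> paths G \<and> src G mu = rng G nu \<and>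
                     deg G mu = p \<and> deg G nu = deg G l - p \<and> l = comp G mu nu"
    unfolding FQ_def by (simp only: case_prod_conv)
  have e1: "pre l p = mu" and e2: "suf l p = nu" unfolding pre_def suf_def e by simp_all
  show "pre l p \<in> paths G" "suf l p \<in> paths G" "src G (pre l p) = rng G (suf l p)"
    "deg G (pre l p) = p" "deg G (suf l p) = deg G l - p" "comp G (pre l p) (suf l p) = l"
    unfolding e1 e2 using q by blast+
qed

lemma fac_unique: assumes "mu \<in> paths G" "nu \<in> paths G" "src G mu = rng G nu"
  shows "pre (comp G mu nu) (deg G mu) = mu" "suf (comp G mu nu) (deg G mu) = nu"
proof -
  let ?l = "comp G mu nu"
  have l: "?l \<in> paths G" using comp_in assms by auto
  have d: "deg G ?l = deg G mu + deg G nu" using assms by simp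
  hence le: "deg G mu \<le> deg G ?l" using fa_le_add by simp
  have dd: "deg G nu = deg G ?l - deg G mu" unfolding d by (simp only: fa_add_diff2)
  have "FQ ?l (deg G mu) (mu, nu)" unfolding FQ_def case_prod_conv using assms dd by blast
  hence "The (FQ ?l (deg G mu)) = (mu, nu)" by (rule the1_equality[OF FQ_ex1[OF l le]])
  thus "pre ?l (deg G mu) = mu" "suf ?l (deg G mu) = nu" unfolding pre_def suf_def by auto
qed

lemma fac_unique': assumes "mu \<in> paths G" "nu \<in> paths G" "src G mu = rng G nu" "l = comp G mu nu" "p = deg G mu"
  shows "pre l p = mu" "suf l p = nu" using fac_unique assms by auto

lemma pre_rng: assumes "l \<in> paths G" "p \<le> deg G l" shows "rng G (pre l p) = rng G l"
proof -
  note f = fac[OF assms]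
  have "rng G (comp G (pre l p) (suf l p)) = rng G (pre l p)" using f by (intro comp_rng)
  thus ?thesis using f by simp
qed
lemma suf_src: assumes "l \<in> paths G" "p \<le> deg G l" shows "src G (suf l p) = src G l"
proof -
  note f = fac[OF assms]
  have "src G (comp G (pre l p) (suf l p)) = src G (suf l p)" using f by (intro comp_src)
  thus ?thesis using f by simp
qed

lemma deg0_ident: assumes "l \<in> paths G" "deg G l = 0" shows "l = ident G (rng G l)"
proof -
  have v: "rng G l \<in> verts G" "src G l \<in> verts G" using rng_in src_in assms by auto
  have "pre (comp G (ident G (rng G l)) l) (deg G (ident G (rng G l))) = ident G (rng G l)"
    using fac_unique[of "ident G (rng G l)" l] v ident_in assms by simp
  moreover have "pre (comp G l (ident G (src G l))) (deg G l) = l"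
    using fac_unique[of l "ident G (src G l)"] v ident_in assms by simp
  ultimately show ?thesis using comp_id_l comp_id_r assms v by simp
qed

lemma deg0_src: assumes "l \<in> paths G" "deg G l = 0" shows "src G l = rng G l"
  using ident_src[OF rng_in[OF assms(1)]] deg0_ident[OF assms] by simp

lemma pre_full: "l \<in> paths G \<Longrightarrow> pre l (deg G l) = l"
  using fac_unique(1)[of l "ident G (src G l)"] comp_id_r ident_in src_in by simp
lemma suf_full: assumes "l \<in> paths G" shows "suf l (deg G l) = ident G (src G l)"
  using fac_unique(2)[of l "ident G (src G l)"] comp_id_r ident_in src_in assms by simp
lemma pre_0: assumes "l \<in> paths G" shows "pre l 0 = ident G (rng G l)"
  using fac_unique(1)[of "ident G (rng G l)" l] comp_id_l ident_in rng_in assms by simp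
lemma suf_0: assumes "l \<in> paths G" shows "suf l 0 = l"
  using fac_unique(2)[of "ident G (rng G l)" l] comp_id_l ident_in rng_in assms by simp

lemma pre_pre: assumes "l \<in> paths G" "p \<le> q" "q \<le> deg G l"
  shows "pre (pre l q) p = pre l p"
proof -
  note f1 = fac[OF assms(1,3)]
  have pq: "p \<le> deg G (pre l q)" using f1 assms by simp
  note f2 = fac[OF f1(1) pq]
  have ss: "src G (suf (pre l q) p) = rng G (suf l q)" using suf_src[OF f1(1) pq] f1 by simp
  have "l = comp G (comp G (pre (pre l q) p) (suf (pre l q) p)) (suf l q)" using f1 f2 by simp
  also have "\<dots> = comp G (pre (pre l q) p) (comp G (suf (pre l q) p) (suf l q))"
    using f1 f2 ss by (intro comp_assoc) auto
  finally have eq: "l = comp G (pre (pre l q) p) (comp G (suf (pre l q) p) (suf l q))" .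
  have c: "comp G (suf (pre l q) p) (suf l q) \<in> paths G" using comp_in f1 f2 ss by simp
  have s: "src G (pre (pre l q) p) = rng G (comp G (suf (pre l q) p) (suf l q))" using f1 f2 ss by simp
  have "pre l (deg G (pre (pre l q) p)) = pre (pre l q) p"
    using fac_unique'(1)[OF f2(1) c s eq HOL.refl] .
  thus ?thesis using f2 by simp
qed

lemma pre_comp_le: assumes "l \<in> paths G" "m \<in> paths G" "src G l = rng G m" "p \<le> deg G l"
  shows "pre (comp G l m) p = pre l p"
proof -
  note f = fac[OF assms(1,4)]
  have ss: "src G (suf l p) = rng G m" using suf_src assms by simp
  have "comp G l m = comp G (comp G (pre l p) (suf l p)) m" using f by simp
  also have "\<dots> = comp G (pre l p) (comp G (suf l p) m)" using f ss assms by (intro comp_assoc) auto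
  finally have eq: "comp G l m = comp G (pre l p) (comp G (suf l p) m)" .
  have c: "comp G (suf l p) m \<in> paths G" using comp_in f ss assms by simp
  have s: "src G (pre l p) = rng G (comp G (suf l p) m)" using f ss assms by simp
  show ?thesis using fac_unique'(1)[OF f(1) c s eq] f by simp
qed

lemma pre_comp_ge: assumes "l \<in> paths G" "m \<in> paths G" "src G l = rng G m" "deg G l \<le> p" "p \<le> deg G l + deg G m"
  shows "pre (comp G l m) p = comp G l (pre m (p - deg G l))"
    "suf (comp G l m) p = suf m (p - deg G l)"
proof -
  have le: "p - deg G l \<le> deg G m" using fa_le_diff2[OF assms(5)] .
  note f = fac[OF assms(2) le]
  have pr: "rng G (pre m (p - deg G l)) = src G l" using pre_rng[OF assms(2) le] assms by simp
  have "comp G l m = comp G l (comp G (pre m (p - deg G l)) (suf m (p - deg G l)))" using f by simp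
  also have "\<dots> = comp G (comp G l (pre m (p - deg G l))) (suf m (p - deg G l))"
    using f pr assms by (intro comp_assoc[symmetric]) auto
  finally have eq: "comp G l m = comp G (comp G l (pre m (p - deg G l))) (suf m (p - deg G l))" .
  have d: "deg G (comp G l (pre m (p - deg G l))) = p"
    using f assms pr fa_add_diff[OF assms(4)] by simp
  have c: "comp G l (pre m (p - deg G l)) \<in> paths G" using f assms pr comp_in by auto
  have s: "src G (comp G l (pre m (p - deg G l))) = rng G (suf m (p - deg G l))"
    using f assms pr by simp
  show "pre (comp G l m) p = comp G l (pre m (p - deg G l))"
    "suf (comp G l m) p = suf m (p - deg G l)" using fac_unique'[OF c f(2) s eq d[symmetric]] by auto
qed

lemma suf_suf: assumes "l \<in> paths G" "p + q \<le> deg G l"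
  shows "suf (suf l p) q = suf l (p + q)" "pre l (p + q) = comp G (pre l p) (pre (suf l p) q)"
    "pre (suf l p) q = suf (pre l (p + q)) p"
proof -
  have p: "p \<le> deg G l" using order_trans[OF fa_le_add assms(2)] .
  note f1 = fac[OF assms(1) p]
  have q: "q \<le> deg G (suf l p)" using f1 fa_le_diff[OF assms(2)] by simp
  note f2 = fac[OF f1(2) q]
  have r: "rng G (pre (suf l p) q) = src G (pre l p)" using pre_rng f1 f2 q by simp
  have "l = comp G (pre l p) (comp G (pre (suf l p) q) (suf (suf l p) q))" using f1 f2 by simp
  also have "\<dots> = comp G (comp G (pre l p) (pre (suf l p) q)) (suf (suf l p) q)"
    using comp_assoc f1 f2 r by simp
  finally have eq: "l = comp G (comp G (pre l p) (pre (suf l p) q)) (suf (suf l p) q)" .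
  have c: "comp G (pre l p) (pre (suf l p) q) \<in> paths G" using comp_in f1 f2 r by simp
  have dc: "deg G (comp G (pre l p) (pre (suf l p) q)) = p + q" using f1 f2 r by simp
  have s: "src G (comp G (pre l p) (pre (suf l p) q)) = rng G (suf (suf l p) q)" using f1 f2 r by simp
  show "suf (suf l p) q = suf l (p + q)" "pre l (p + q) = comp G (pre l p) (pre (suf l p) q)"
    using fac_unique'[OF c f2(2) s eq] dc by auto
  then show "pre (suf l p) q = suf (pre l (p + q)) p"
    using fac_unique(2)[of "pre l p" "pre (suf l p) q"] f1 f2 r by simp
qed

end



context kg begin

definition Om :: "((nat\<Rightarrow>nat) \<Rightarrow> 'a) set" where
  "Om = {y. (\<forall>n\<in>Nk k. y n \<in> paths G \<and> deg G (y n) = n) \<and> (\<forall>n. n \<notin> Nk k \<longrightarrow> y n = undefined)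
          \<and> (\<forall>n\<in>Nk k. \<forall>m\<in>Nk k. n \<le> m \<longrightarrow> y n = pre (y m) n)}"

definition rr :: "((nat\<Rightarrow>nat) \<Rightarrow> 'a) \<Rightarrow> 'v" where "rr y = rng G (y 0)"
definition shift :: "(nat\<Rightarrow>nat) \<Rightarrow> ((nat\<Rightarrow>nat) \<Rightarrow> 'a) \<Rightarrow> ((nat\<Rightarrow>nat) \<Rightarrow> 'a)" where
  "shift p y = (\<lambda>n. if n \<in> Nk k then suf (y (p + n)) p else undefined)"
definition cat :: "'a \<Rightarrow> ((nat\<Rightarrow>nat) \<Rightarrow> 'a) \<Rightarrow> ((nat\<Rightarrow>nat) \<Rightarrow> 'a)" where
  "cat l y = (\<lambda>n. if n \<in> Nk k then pre (comp G l (y n)) n else undefined)"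

lemma OmI: assumes "\<And>n. n \<in> Nk k \<Longrightarrow> y n \<in> paths G" "\<And>n. n \<in> Nk k \<Longrightarrow> deg G (y n) = n"
  "\<And>n. n \<notin> Nk k \<Longrightarrow> y n = undefined"
  "\<And>n m. n \<in> Nk k \<Longrightarrow> m \<in> Nk k \<Longrightarrow> n \<le> m \<Longrightarrow> y n = pre (y m) n"
shows "y \<in> Om" unfolding Om_def mem_Collect_eq using assms by (intro conjI ballI allI impI)

lemma OmD: "y \<in> Om \<Longrightarrow> (\<forall>n\<in>Nk k. y n \<in> paths G \<and> deg G (y n) = n) \<and> (\<forall>n. n \<notin> Nk k \<longrightarrow> y n = undefined)
          \<and> (\<forall>n\<in>Nk k. \<forall>m\<in>Nk k. n \<le> m \<longrightarrow> y n = pre (y m) n)" unfolding Om_def mem_Collect_eq .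

lemma Om_path: "y \<in> Om \<Longrightarrow> n \<in> Nk k \<Longrightarrow> y n \<in> paths G" using OmD[THEN conjunct1] by blast
lemma Om_deg: "y \<in> Om \<Longrightarrow> n \<in> Nk k \<Longrightarrow> deg G (y n) = n" using OmD[THEN conjunct1] by blast
lemma Om_out: "y \<in> Om \<Longrightarrow> n \<notin> Nk k \<Longrightarrow> y n = undefined" using OmD[THEN conjunct2, THEN conjunct1] by blast
lemma Om_coh: assumes "y \<in> Om" "n \<le> m" "m \<in> Nk k" shows "y n = pre (y m) n"
proof -
  have "n \<in> Nk k" using Nk_le assms by blast
  thus ?thesis using OmD[OF assms(1), THEN conjunct2, THEN conjunct2] assms by blast
qed

lemma Om_eqI: assumes "y \<in> Om" "z \<in> Om" "\<And>n. n \<in> Nk k \<Longrightarrow> y n = z n" shows "y = z"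
proof (rule ext)
  fix n show "y n = z n" by (cases "n \<in> Nk k") (simp_all add: assms Om_out)
qed

lemma rr_in: "y \<in> Om \<Longrightarrow> rr y \<in> verts G" unfolding rr_def using Om_path rng_in by simp

lemma Om_0: assumes "y \<in> Om" shows "y 0 = ident G (rr y)"
  unfolding rr_def using deg0_ident[OF Om_path[OF assms Nk_0] Om_deg[OF assms Nk_0]] .

lemma zero_le_fa: "(0::nat\<Rightarrow>nat) \<le> n" by (simp add: le_fun_def)

lemma Om_rng: assumes "y \<in> Om" "n \<in> Nk k" shows "rng G (y n) = rr y"
proof -
  have "y 0 = pre (y n) 0" by (rule Om_coh[OF assms(1) zero_le_fa assms(2)])
  also have "\<dots> = ident G (rng G (y n))" by (rule pre_0[OF Om_path[OF assms]])
  finally have "y 0 = ident G (rng G (y n))" .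
  hence "rng G (y 0) = rng G (y n)" using ident_rng[OF rng_in[OF Om_path[OF assms]]] by simp
  thus ?thesis unfolding rr_def by simp
qed

lemma Om_0_iff: assumes "y \<in> Om" "v \<in> verts G" shows "y 0 = ident G v \<longleftrightarrow> rr y = v"
proof
  assume "y 0 = ident G v"
  hence "ident G (rr y) = ident G v" using Om_0[OF assms(1)] by simp
  hence "rng G (ident G (rr y)) = rng G (ident G v)" by simp
  thus "rr y = v" using ident_rng[OF assms(2)] ident_rng[OF rr_in[OF assms(1)]] by simp
qed (use Om_0[OF assms(1)] in simp)

lemma shift_Om: assumes "y \<in> Om" "p \<in> Nk k" shows "shift p y \<in> Om"
proof (rule OmI)
  fix n assume n: "n \<in> Nk k"
  have pn: "p + n \<in> Nk k" using n assms by auto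
  have l: "p \<le> deg G (y (p + n))" using Om_deg[OF assms(1) pn] fa_le_add by simp
  show "shift p y n \<in> paths G" "deg G (shift p y n) = n"
    unfolding shift_def using n fac[OF Om_path[OF assms(1) pn] l] Om_deg[OF assms(1) pn] fa_add_diff2 by auto
next
  fix n assume "n \<notin> Nk k" thus "shift p y n = undefined" unfolding shift_def by simp
next
  fix n m assume n: "n \<in> Nk k" and m: "m \<in> Nk k" and nm: "n \<le> m"
  have pm: "p + m \<in> Nk k" using m assms by auto
  have le: "p + n \<le> deg G (y (p + m))" using Om_deg[OF assms(1) pm] nm by (simp add: add_left_mono)
  have le2: "p + n \<le> p + m" using nm by (simp add: add_left_mono)
  have "shift p y n = suf (y (p + n)) p" using n unfolding shift_def by simp
  also have "\<dots> = suf (pre (y (p + m)) (p + n)) p" using Om_coh[OF assms(1) le2 pm] by simp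
  also have "\<dots> = pre (suf (y (p + m)) p) n" using suf_suf(3)[OF Om_path[OF assms(1) pm] le] by simp
  also have "\<dots> = pre (shift p y m) n" using m unfolding shift_def by simp
  finally show "shift p y n = pre (shift p y m) n" .
qed

lemma shift_rr: assumes "y \<in> Om" "p \<in> Nk k" shows "rr (shift p y) = src G (y p)"
proof -
  have "shift p y 0 = suf (y p) p" unfolding shift_def by simp
  also have "\<dots> = ident G (src G (y p))" using suf_full[OF Om_path[OF assms(1,2)]] Om_deg[OF assms(1,2)] by simp
  finally show ?thesis unfolding rr_def using src_in Om_path assms by simp
qed

lemma shift_0: assumes "y \<in> Om" shows "shift 0 y = y"
  by (rule ext) (simp add: shift_def suf_0 Om_path Om_out assms)

lemma shift_shift: assumes "y \<in> Om" "p \<in> Nk k" "q \<in> Nk k" shows "shift q (shift p y) = shift (p + q) y"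
proof (rule ext)
  fix n show "shift q (shift p y) n = shift (p + q) y n"
  proof (cases "n \<in> Nk k")
    case True
    have pqn: "p + (q + n) \<in> Nk k" using True assms by auto
    have le: "p + q \<le> deg G (y (p + (q + n)))" using Om_deg[OF assms(1) pqn]
      by (simp add: add.assoc[symmetric] fa_le_add)
    have "shift q (shift p y) n = suf (suf (y (p + (q + n))) p) q"
      using True assms unfolding shift_def by auto
    also have "\<dots> = suf (y (p + (q + n))) (p + q)" using suf_suf(1)[OF Om_path[OF assms(1) pqn] le] .
    finally show ?thesis using True unfolding shift_def by (simp add: add.assoc)
  qed (simp add: shift_def)
qed

lemma cat_Om: assumes "l \<in> paths G" "y \<in> Om" "rr y = src G l" shows "cat l y \<in> Om"
proof (rule OmI)
  fix n assume n: "n \<in> Nk k"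
  have c: "comp G l (y n) \<in> paths G" "deg G (comp G l (y n)) = deg G l + n"
    using comp_in Om_path Om_deg Om_rng assms n by auto
  have le: "n \<le> deg G (comp G l (y n))" using c fa_le_add2 by simp
  show "cat l y n \<in> paths G" "deg G (cat l y n) = n" unfolding cat_def using n fac[OF c(1) le] by auto
next
  fix n assume "n \<notin> Nk k" thus "cat l y n = undefined" unfolding cat_def by simp
next
  fix n m assume n: "n \<in> Nk k" and m: "m \<in> Nk k" and nm: "n \<le> m"
  have ym: "y m \<in> paths G" "src G l = rng G (y m)" "deg G (y m) = m" using Om_path Om_rng Om_deg assms m by auto
  have c: "comp G l (y m) \<in> paths G" "deg G (comp G l (y m)) = deg G l + m" using comp_in ym assms by auto
  have le1: "deg G l \<le> deg G l + n" by (rule fa_le_add)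
  have le2: "deg G l + n \<le> deg G l + deg G (y m)" using ym nm by (simp add: add_left_mono)
  have "cat l y n = pre (comp G l (pre (y m) n)) n" unfolding cat_def using n Om_coh[OF assms(2) nm m] by simp
  also have "comp G l (pre (y m) n) = pre (comp G l (y m)) (deg G l + n)"
    using pre_comp_ge(1)[OF assms(1) ym(1,2) le1 le2] fa_add_diff2 by simp
  also have "pre (pre (comp G l (y m)) (deg G l + n)) n = pre (comp G l (y m)) n"
    using pre_pre[OF c(1) fa_le_add2] le2 ym c by simp
  also have "\<dots> = pre (pre (comp G l (y m)) m) n"
    using pre_pre[OF c(1) nm] c fa_le_add2 by simp
  finally show "cat l y n = pre (cat l y m) n" unfolding cat_def using m by simp
qed

lemma cat_le: assumes "l \<in> paths G" "y \<in> Om" "rr y = src G l" "p \<le> deg G l"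
  shows "cat l y p = pre l p"
proof -
  have p: "p \<in> Nk k" using Nk_le assms deg_in by blast
  show ?thesis unfolding cat_def using p pre_comp_le[OF assms(1) Om_path[OF assms(2) p] _ assms(4)]
      Om_rng[OF assms(2) p] assms(3) by simp
qed

lemma cat_Z: assumes "l \<in> paths G" "y \<in> Om" "rr y = src G l" shows "cat l y (deg G l) = l"
  using cat_le[OF assms order_refl] pre_full assms by simp

lemma cat_rr: assumes "l \<in> paths G" "y \<in> Om" "rr y = src G l" shows "rr (cat l y) = rng G l"
  unfolding rr_def using cat_le[OF assms, of 0] pre_0 assms rng_in by (simp add: le_fun_def)

lemma cat_ge: assumes "l \<in> paths G" "y \<in> Om" "rr y = src G l" "n \<in> Nk k"
  shows "cat l y (deg G l + n) = comp G l (y n)"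
proof -
  have dn: "deg G l + n \<in> Nk k" using deg_in assms by auto
  have Y: "y (deg G l + n) \<in> paths G" "src G l = rng G (y (deg G l + n))" "deg G (y (deg G l + n)) = deg G l + n"
    using Om_path Om_rng Om_deg assms dn by auto
  have "cat l y (deg G l + n) = pre (comp G l (y (deg G l + n))) (deg G l + n)" unfolding cat_def using dn by simp
  also have "\<dots> = comp G l (pre (y (deg G l + n)) n)"
    using pre_comp_ge(1)[OF assms(1) Y(1,2) fa_le_add] Y(3) fa_add_diff2 add_left_mono[OF fa_le_add2]
    by simp
  also have "pre (y (deg G l + n)) n = y n" using Om_coh[OF assms(2) fa_le_add2 dn] by simp
  finally show ?thesis .
qed

lemma shift_cat: assumes "l \<in> paths G" "y \<in> Om" "rr y = src G l" shows "shift (deg G l) (cat l y) = y"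
proof (rule ext)
  fix n show "shift (deg G l) (cat l y) n = y n"
  proof (cases "n \<in> Nk k")
    case True
    have "shift (deg G l) (cat l y) n = suf (comp G l (y n)) (deg G l)"
      unfolding shift_def using True cat_ge assms by simp
    also have "\<dots> = y n" using fac_unique(2) assms Om_path Om_rng True by simp
    finally show ?thesis .
  qed (simp add: shift_def Om_out assms)
qed

lemma cat_shift: assumes "l \<in> paths G" "y \<in> Om" "y (deg G l) = l" shows "cat l (shift (deg G l) y) = y"
proof (rule ext)
  fix n show "cat l (shift (deg G l) y) n = y n"
  proof (cases "n \<in> Nk k")
    case True
    have dn: "deg G l + n \<in> Nk k" using deg_in assms True by auto
    have Y: "y (deg G l + n) \<in> paths G" "deg G (y (deg G l + n)) = deg G l + n"
      using Om_path Om_deg assms dn by auto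
    have le: "deg G l \<le> deg G (y (deg G l + n))" using Y fa_le_add by simp
    have pl: "pre (y (deg G l + n)) (deg G l) = l" using Om_coh[OF assms(2) fa_le_add dn] assms by simp
    have "comp G l (suf (y (deg G l + n)) (deg G l)) = y (deg G l + n)" using fac(6)[OF Y(1) le] pl by simp
    hence "cat l (shift (deg G l) y) n = pre (y (deg G l + n)) n" unfolding cat_def shift_def using True by simp
    also have "\<dots> = y n" using Om_coh[OF assms(2) fa_le_add2 dn] by simp
    finally show ?thesis .
  qed (simp add: cat_def Om_out assms)
qed

lemma cat_cat: assumes "l \<in> paths G" "m \<in> paths G" "src G l = rng G m" "y \<in> Om" "rr y = src G m"
  shows "cat l (cat m y) = cat (comp G l m) y"
proof (rule ext)
  fix n show "cat l (cat m y) n = cat (comp G l m) y n"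
  proof (cases "n \<in> Nk k")
    case True
    have Y: "y n \<in> paths G" "src G m = rng G (y n)" "deg G (y n) = n" using Om_path Om_rng Om_deg assms True by auto
    have c: "comp G m (y n) \<in> paths G" "src G l = rng G (comp G m (y n))" "deg G (comp G m (y n)) = deg G m + n"
      using comp_in Y assms by auto
    have cc: "comp G l (comp G m (y n)) \<in> paths G" using comp_in c assms by simp
    have le2: "deg G l + n \<le> deg G l + deg G (comp G m (y n))" using c by (simp add: add_left_mono fa_le_add2)
    have "comp G l (pre (comp G m (y n)) n) = pre (comp G l (comp G m (y n))) (deg G l + n)"
      using pre_comp_ge(1)[OF assms(1) c(1,2) fa_le_add le2] fa_add_diff2 by simp
    hence "cat l (cat m y) n = pre (pre (comp G l (comp G m (y n))) (deg G l + n)) n"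
      unfolding cat_def using True by simp
    also have "\<dots> = pre (comp G l (comp G m (y n))) n"
      using pre_pre[OF cc fa_le_add2] le2 c assms by simp
    also have "comp G l (comp G m (y n)) = comp G (comp G l m) (y n)" using comp_assoc assms Y by simp
    finally show ?thesis unfolding cat_def using True by simp
  qed (simp add: cat_def)
qed

lemma cat_ident: assumes "y \<in> Om" shows "cat (ident G (rr y)) y = y"
proof (rule ext)
  fix n show "cat (ident G (rr y)) y n = y n"
  proof (cases "n \<in> Nk k")
    case True
    have "comp G (ident G (rr y)) (y n) = y n" using comp_id_l[OF Om_path[OF assms True]] Om_rng[OF assms True] by simp
    thus ?thesis unfolding cat_def using True pre_full[OF Om_path[OF assms True]] Om_deg[OF assms True] by simp
  qed (simp add: cat_def Om_out assms)
qed

lemma shift_Z: assumes "y \<in> Om" "l \<in> paths G" "y (deg G l) = l" "m \<in> paths G" "src G l = rng G m"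
  shows "shift (deg G l) y (deg G m) = m \<longleftrightarrow> y (deg G l + deg G m) = comp G l m"
proof -
  have dn: "deg G l + deg G m \<in> Nk k" using deg_in assms by auto
  have Y: "y (deg G l + deg G m) \<in> paths G" "deg G (y (deg G l + deg G m)) = deg G l + deg G m"
    using Om_path Om_deg assms dn by auto
  have le: "deg G l \<le> deg G (y (deg G l + deg G m))" using Y fa_le_add by simp
  have pl: "pre (y (deg G l + deg G m)) (deg G l) = l" using Om_coh[OF assms(1) fa_le_add dn] assms by simp
  have sh: "shift (deg G l) y (deg G m) = suf (y (deg G l + deg G m)) (deg G l)"
    unfolding shift_def using deg_in assms by simp
  show ?thesis
  proof
    assume "shift (deg G l) y (deg G m) = m"
    thus "y (deg G l + deg G m) = comp G l m" using sh fac(6)[OF Y(1) le] pl by simp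
  next
    assume "y (deg G l + deg G m) = comp G l m"
    thus "shift (deg G l) y (deg G m) = m" using sh fac_unique(2) assms by simp
  qed
qed

end



context kg begin

lemma rf_fin: assumes "v \<in> verts G" "n \<in> Nk k" shows "finite {l\<in>paths G. rng G l = v \<and> deg G l = n}"
  and "{l\<in>paths G. rng G l = v \<and> deg G l = n} \<noteq> {}"
proof -
  have "\<forall>v\<in>verts G. \<forall>n\<in>Nk k. finite {l\<in>paths G. rng G l = v \<and> deg G l = n} \<and>
        {l\<in>paths G. rng G l = v \<and> deg G l = n} \<noteq> {}" using rf unfolding row_finite_no_sources_def .
  hence "finite {l\<in>paths G. rng G l = v \<and> deg G l = n} \<and> {l\<in>paths G. rng G l = v \<and> deg G l = n} \<noteq> {}"
    using assms by blast
  thus "finite {l\<in>paths G. rng G l = v \<and> deg G l = n}" "{l\<in>paths G. rng G l = v \<and> deg G l = n} \<noteq> {}" by auto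
qed
lemma rf_ne: "v \<in> verts G \<Longrightarrow> n \<in> Nk k \<Longrightarrow> \<exists>l. l \<in> paths G \<and> rng G l = v \<and> deg G l = n"
  using rf_fin(2) by blast

definition diag :: "nat \<Rightarrow> nat \<Rightarrow> nat" where "diag j = (\<lambda>i. if i < k then j else 0)"
lemma diag_Nk: "diag j \<in> Nk k" by (simp add: diag_def Nk_def)
lemma diag_Suc: "diag (Suc j) = diag j + diag 1" by (auto simp: diag_def fun_eq_iff)
lemma diag_mono: "j \<le> j' \<Longrightarrow> diag j \<le> diag j'" by (auto simp: diag_def le_fun_def)

definition ext :: "'a \<Rightarrow> 'a" where
  "ext c = (SOME e. e \<in> paths G \<and> rng G e = src G c \<and> deg G e = diag 1)"

lemma ext_prop: assumes "c \<in> paths G" shows "ext c \<in> paths G \<and> rng G (ext c) = src G c \<and> deg G (ext c) = diag 1"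
proof -
  have "\<exists>e. e \<in> paths G \<and> rng G e = src G c \<and> deg G e = diag 1" using rf_ne src_in assms diag_Nk by blast
  thus ?thesis unfolding ext_def by (rule someI_ex)
qed

primrec ch :: "'v \<Rightarrow> nat \<Rightarrow> 'a" where
  "ch v 0 = ident G v"
| "ch v (Suc j) = comp G (ch v j) (ext (ch v j))"

lemma ch_prop: assumes "v \<in> verts G" shows "ch v j \<in> paths G \<and> rng G (ch v j) = v \<and> deg G (ch v j) = diag j"
proof (induction j)
  case 0 thus ?case using assms ident_in by (simp add: diag_def fun_eq_iff)
next
  case (Suc j)
  note e = ext_prop[of "ch v j"]
  show ?case using Suc e comp_in diag_Suc[of j] by simp
qed

lemma ch_pre: assumes "v \<in> verts G" "j \<le> j'" shows "pre (ch v j') (diag j) = ch v j"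
  using assms(2)
proof (induction j' rule: dec_induct)
  case base thus ?case using pre_full[of "ch v j"] ch_prop[OF assms(1), of j] by simp
next
  case (step j')
  note c = ch_prop[OF assms(1), of j']
  note e = ext_prop[of "ch v j'"]
  have "pre (ch v (Suc j')) (diag j) = pre (ch v j') (diag j)"
    using pre_comp_le[of "ch v j'" "ext (ch v j')" "diag j"] c e diag_mono[OF step(1)] by simp
  thus ?case using step by simp
qed

definition J :: "(nat \<Rightarrow> nat) \<Rightarrow> nat" where "J n = (\<Sum>i<k. n i)"

lemma J_le: assumes "n \<in> Nk k" shows "n \<le> diag (J n)"
proof (rule le_funI)
  fix i show "n i \<le> diag (J n) i"
  proof (cases "i < k")
    case True
    have "n i \<le> (\<Sum>i<k. n i)" using True by (intro member_le_sum) auto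
    thus ?thesis using True by (simp add: diag_def J_def)
  next
    case False thus ?thesis using assms by (simp add: Nk_def diag_def)
  qed
qed

lemma J_mono: "n \<le> m \<Longrightarrow> J n \<le> J m" unfolding J_def by (intro sum_mono) (simp add: le_fun_def)

definition yv :: "'v \<Rightarrow> (nat\<Rightarrow>nat) \<Rightarrow> 'a" where
  "yv v = (\<lambda>n. if n \<in> Nk k then pre (ch v (J n)) n else undefined)"

lemma yv_Om: assumes "v \<in> verts G" shows "yv v \<in> Om" "rr (yv v) = v"
proof -
  show "yv v \<in> Om"
  proof (rule OmI)
    fix n assume n: "n \<in> Nk k"
    note c = ch_prop[OF assms, of "J n"]
    have le: "n \<le> deg G (ch v (J n))" using c J_le n by simp
    show "yv v n \<in> paths G" "deg G (yv v n) = n" unfolding yv_def using n fac[OF _ le] c by auto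
  next
    fix n assume "n \<notin> Nk k" thus "yv v n = undefined" unfolding yv_def by simp
  next
    fix n m assume n: "n \<in> Nk k" and m: "m \<in> Nk k" and nm: "n \<le> m"
    note cm = ch_prop[OF assms, of "J m"]
    have le1: "n \<le> diag (J n)" using J_le n .
    have le2: "diag (J n) \<le> deg G (ch v (J m))" using cm diag_mono J_mono nm by simp
    have le3: "m \<le> deg G (ch v (J m))" using cm J_le m by simp
    have "yv v n = pre (pre (ch v (J m)) (diag (J n))) n" unfolding yv_def
      using n ch_pre[OF assms J_mono[OF nm]] by simp
    also have "\<dots> = pre (ch v (J m)) n" using pre_pre[OF _ le1 le2] cm by simp
    also have "\<dots> = pre (pre (ch v (J m)) m) n" using pre_pre[OF _ nm le3] cm by simp
    finally show "yv v n = pre (yv v m) n" unfolding yv_def using m by simp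
  qed
  note c = ch_prop[OF assms, of "J 0"]
  show "rr (yv v) = v" unfolding rr_def yv_def using pre_rng[OF _ zero_le_fa] c by simp
qed

lemma Om_exists: "v \<in> verts G \<Longrightarrow> \<exists>y\<in>Om. rr y = v" using yv_Om by blast

end



context kg begin

fun repg :: "('v, 'a) kpgen \<Rightarrow> (((nat\<Rightarrow>nat)\<Rightarrow>'a) \<Rightarrow> 'r) \<Rightarrow> (((nat\<Rightarrow>nat)\<Rightarrow>'a) \<Rightarrow> 'r::comm_ring_1)" where
  "repg (Pv v) f = (\<lambda>y. if y \<in> Om \<and> rr y = v then f y else 0)"
| "repg (Sg l) f = (\<lambda>y. if l \<in> paths G \<and> y \<in> Om \<and> y (deg G l) = l then f (shift (deg G l) y) else 0)"
| "repg (Ss l) f = (\<lambda>y. if l \<in> paths G \<and> y \<in> Om \<and> rr y = src G l then f (cat l y) else 0)"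

fun rep :: "('v, 'a, 'r) kpterm \<Rightarrow> (((nat\<Rightarrow>nat)\<Rightarrow>'a) \<Rightarrow> 'r) \<Rightarrow> (((nat\<Rightarrow>nat)\<Rightarrow>'a) \<Rightarrow> 'r::comm_ring_1)" where
  "rep TZero f = (\<lambda>y. 0)"
| "rep (TGen g) f = repg g f"
| "rep (TAdd a b) f = (\<lambda>y. rep a f y + rep b f y)"
| "rep (TNeg a) f = (\<lambda>y. - rep a f y)"
| "rep (TMul a b) f = rep a (rep b f)"
| "rep (TSmul r a) f = (\<lambda>y. r * rep a f y)"

lemma repg_add: "repg g (\<lambda>y. f y + h y) = (\<lambda>y. repg g f y + repg g h y)"
  by (cases g) (auto simp: fun_eq_iff)
lemma repg_smul: "repg g (\<lambda>y. c * f y) = (\<lambda>y. c * repg g f y)"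
  by (cases g) (auto simp: fun_eq_iff)

lemma rep_lin: "rep a (\<lambda>y. f y + h y) = (\<lambda>y. rep a f y + rep a h y) \<and> rep a (\<lambda>y. c * f y) = (\<lambda>y. c * rep a f y)"
proof (induction a arbitrary: f h c)
  case (TGen g) thus ?case by (simp add: repg_add repg_smul)
next
  case (TMul a b) thus ?case by simp
qed (auto simp: fun_eq_iff algebra_simps)

lemma rep_add: "rep a (\<lambda>y. f y + h y) = (\<lambda>y. rep a f y + rep a h y)" using rep_lin by blast
lemma rep_smul: "rep a (\<lambda>y. c * f y) = (\<lambda>y. c * rep a f y)" using rep_lin by blast

lemma rep_sT: assumes "l \<in> paths G"
  shows "rep (sT G l) f = (\<lambda>y. if y \<in> Om \<and> y (deg G l) = l then f (shift (deg G l) y) else 0)"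
proof (cases "deg G l = 0")
  case True
  have l: "l = ident G (src G l)" using deg0_ident[OF assms True] deg0_src[OF assms True] by simp
  have e: "\<And>y. y \<in> Om \<Longrightarrow> y 0 = l \<longleftrightarrow> rr y = src G l" using Om_0_iff src_in assms l by metis
  show ?thesis
  proof (rule ext)
    fix y
    show "rep (sT G l) f y = (if y \<in> Om \<and> y (deg G l) = l then f (shift (deg G l) y) else 0)"
    proof (cases "y \<in> Om")
      case T: True
      thus ?thesis using e[OF T] shift_0[OF T] unfolding sT_def True by simp
    qed (simp add: sT_def True)
  qed
next
  case False show ?thesis unfolding sT_def if_not_P[OF False] using assms by (intro ext) simp
qed

lemma rep_sstT: assumes "l \<in> paths G"
  shows "rep (sstT G l) f = (\<lambda>y. if y \<in> Om \<and> rr y = src G l then f (cat l y) else 0)"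
proof (cases "deg G l = 0")
  case True
  have l: "l = ident G (src G l)" using deg0_ident[OF assms True] deg0_src[OF assms True] by simp
  have e: "\<And>y. y \<in> Om \<Longrightarrow> rr y = src G l \<Longrightarrow> cat l y = y" using cat_ident l by metis
  show ?thesis
  proof (rule ext)
    fix y
    show "rep (sstT G l) f y = (if y \<in> Om \<and> rr y = src G l then f (cat l y) else 0)"
      using e[of y] unfolding sstT_def True by simp
  qed
next
  case False show ?thesis unfolding sstT_def if_not_P[OF False] using assms by (intro ext) simp
qed

lemma rep_pT: "rep (pT v) f = (\<lambda>y. if y \<in> Om \<and> rr y = v then f y else 0)"
  unfolding pT_def by simp

lemma rep_tsum: "rep (tsum_list ts) f y = sum_list (map (\<lambda>t. rep t f y) ts)"
  by (induction ts) auto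

lemma rep_C: assumes "l \<in> paths G"
  shows "rep (TMul (sT G l) (sstT G l)) f = (\<lambda>y. if y \<in> Om \<and> y (deg G l) = l then f y else 0)"
proof (rule ext)
  fix y
  show "rep (TMul (sT G l) (sstT G l)) f y = (if y \<in> Om \<and> y (deg G l) = l then f y else 0)"
  proof (cases "y \<in> Om \<and> y (deg G l) = l")
    case True
    have d: "deg G l \<in> Nk k" using deg_in assms by simp
    have "shift (deg G l) y \<in> Om" "rr (shift (deg G l) y) = src G l" "cat l (shift (deg G l) y) = y"
      using shift_Om shift_rr cat_shift True d assms by auto
    thus ?thesis using True by (simp add: rep_sT rep_sstT assms)
  qed (auto simp: rep_sT rep_sstT assms)
qed

end



context kg begin

lemma sound: "kp_eq k G a b \<Longrightarrow> rep a = rep b"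
proof (induction rule: kp_eq.induct)
  case (cong_add a a' b b') thus ?case by simp
next
  case (cong_neg a a') thus ?case by simp
next
  case (cong_mul a a' b b') thus ?case by simp
next
  case (cong_smul a a' r) thus ?case by simp
next
  case (add_assoc a b c) thus ?case by (simp add: fun_eq_iff algebra_simps)
next
  case (add_comm a b) thus ?case by (simp add: fun_eq_iff algebra_simps)
next
  case (add_zero a) thus ?case by (simp add: fun_eq_iff)
next
  case (add_neg a) thus ?case by (simp add: fun_eq_iff)
next
  case (mul_assoc a b c) thus ?case by (simp add: fun_eq_iff)
next
  case (distrib_l a b c) thus ?case by (simp add: fun_eq_iff rep_add)
next
  case (distrib_r a b c) thus ?case by (simp add: fun_eq_iff)
next
  case (smul_add r a b) thus ?case by (simp add: fun_eq_iff algebra_simps)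
next
  case (add_smul r r' a) thus ?case by (simp add: fun_eq_iff algebra_simps)
next
  case (smul_smul r r' a) thus ?case by (simp add: fun_eq_iff algebra_simps)
next
  case (one_smul a) thus ?case by (simp add: fun_eq_iff)
next
  case (smul_mul_l r a b) thus ?case by (simp add: fun_eq_iff)
next
  case (smul_mul_r r a b) thus ?case by (simp add: fun_eq_iff rep_smul)
next
  case (KP1_idem v) thus ?case by (simp add: fun_eq_iff rep_pT)
next
  case (KP1_orth v w) thus ?case by (simp add: fun_eq_iff rep_pT)
next
  case (KP2_s l m)
  have lm: "comp G l m \<in> paths G" using comp_in KP2_s by simp
  show ?case
  proof (intro ext)
    fix f y
    show "rep (TMul (sT G l) (sT G m)) f y = rep (sT G (comp G l m)) f y"
    proof (cases "y \<in> Om \<and> y (deg G l) = l")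
      case True
      have d: "deg G l \<in> Nk k" "deg G m \<in> Nk k" using deg_in KP2_s by auto
      have "shift (deg G l) y \<in> Om" using shift_Om True d by simp
      moreover have "shift (deg G l) y (deg G m) = m \<longleftrightarrow> y (deg G l + deg G m) = comp G l m"
        using shift_Z True KP2_s by simp
      moreover have "shift (deg G m) (shift (deg G l) y) = shift (deg G l + deg G m) y"
        using shift_shift True d by simp
      ultimately show ?thesis using True KP2_s lm by (simp add: rep_sT)
    next
      case False
      have "y \<in> Om \<Longrightarrow> y (deg G l + deg G m) = comp G l m \<Longrightarrow> y (deg G l) = l"
      proof -
        assume a: "y \<in> Om" "y (deg G l + deg G m) = comp G l m"
        have "y (deg G l) = pre (y (deg G l + deg G m)) (deg G l)"
          using Om_coh[OF a(1) fa_le_add] deg_in KP2_s by auto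
        thus ?thesis using a fac_unique KP2_s by simp
      qed
      thus ?thesis using False KP2_s lm by (auto simp: rep_sT)
    qed
  qed
next
  case (KP2_sst l m)
  have lm: "comp G l m \<in> paths G" using comp_in KP2_sst by simp
  show ?case
  proof (intro ext)
    fix f y
    show "rep (TMul (sstT G m) (sstT G l)) f y = rep (sstT G (comp G l m)) f y"
    proof (cases "y \<in> Om \<and> rr y = src G m")
      case True
      have "cat m y \<in> Om" "rr (cat m y) = src G l" "cat l (cat m y) = cat (comp G l m) y"
        using cat_Om cat_rr cat_cat True KP2_sst by auto
      thus ?thesis using True KP2_sst lm by (simp add: rep_sstT)
    next
      case False thus ?thesis using KP2_sst lm by (auto simp: rep_sstT)
    qed
  qed
next
  case (KP2_pr_s l)
  show ?case
  proof (intro ext)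
    fix f y
    have "y \<in> Om \<Longrightarrow> y (deg G l) = l \<Longrightarrow> rr y = rng G l" using Om_rng deg_in KP2_pr_s by metis
    thus "rep (TMul (pT (rng G l)) (sT G l)) f y = rep (sT G l) f y"
      using KP2_pr_s by (auto simp: rep_sT rep_pT)
  qed
next
  case (KP2_s_ps l)
  show ?case
  proof (intro ext)
    fix f y
    have "y \<in> Om \<Longrightarrow> y (deg G l) = l \<Longrightarrow> shift (deg G l) y \<in> Om \<and> rr (shift (deg G l) y) = src G l"
      using shift_Om shift_rr deg_in KP2_s_ps by metis
    thus "rep (TMul (sT G l) (pT (src G l))) f y = rep (sT G l) f y"
      using KP2_s_ps by (auto simp: rep_sT rep_pT)
  qed
next
  case (KP2_ps_sst l)
  show ?case by (intro ext) (auto simp: rep_sstT rep_pT KP2_ps_sst)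
next
  case (KP2_sst_pr l)
  show ?case
  proof (intro ext)
    fix f y
    have "y \<in> Om \<Longrightarrow> rr y = src G l \<Longrightarrow> cat l y \<in> Om \<and> rr (cat l y) = rng G l"
      using cat_Om cat_rr KP2_sst_pr by metis
    thus "rep (TMul (sstT G l) (pT (rng G l))) f y = rep (sstT G l) f y"
      using KP2_sst_pr by (auto simp: rep_sstT rep_pT)
  qed
next
  case (KP3 l m)
  show ?case
  proof (intro ext)
    fix f y
    show "rep (TMul (sstT G l) (sT G m)) f y = rep (if l = m then pT (src G l) else TZero) f y"
    proof (cases "y \<in> Om \<and> rr y = src G l")
      case True
      have c1: "cat l y \<in> Om" using cat_Om True KP3(1) by auto
      have c2: "cat l y (deg G l) = l" using cat_Z True KP3(1) by auto
      have c3: "shift (deg G l) (cat l y) = y" using shift_cat True KP3(1) by auto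
      note c = c1 c2[unfolded KP3(4)] c3[unfolded KP3(4)]
      show ?thesis using c True KP3 by (auto simp: rep_sstT rep_sT rep_pT)
    next
      case False thus ?thesis using KP3 by (auto simp: rep_sstT rep_sT rep_pT)
    qed
  qed
next
  case (KP4 v n xs)
  show ?case
  proof (intro ext)
    fix f y
    have "rep (tsum_list (map (\<lambda>l. TMul (sT G l) (sstT G l)) xs)) f y
        = sum_list (map (\<lambda>l. if y \<in> Om \<and> y n = l then f y else 0) xs)"
    proof -
      have "\<And>l. l \<in> set xs \<Longrightarrow> rep (TMul (sT G l) (sstT G l)) f y = (if y \<in> Om \<and> y n = l then f y else 0)"
      proof -
        fix l assume "l \<in> set xs"
        hence lp: "l \<in> paths G" "deg G l = n" using KP4(5) by auto
        show "rep (TMul (sT G l) (sstT G l)) f y = (if y \<in> Om \<and> y n = l then f y else 0)"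
          unfolding rep_C[OF lp(1)] using lp(2) by simp
      qed
      thus ?thesis by (simp add: rep_tsum comp_def cong: map_cong)
    qed
    also have "\<dots> = (\<Sum>l\<in>set xs. if y \<in> Om \<and> y n = l then f y else 0)"
      using KP4 by (simp add: sum_list_distinct_conv_sum_set)
    also have "\<dots> = (if y \<in> Om \<and> rr y = v then f y else 0)"
    proof (cases "y \<in> Om")
      case True
      have "(\<Sum>l\<in>set xs. if y \<in> Om \<and> y n = l then f y else 0) = (\<Sum>l\<in>set xs. if y n = l then f y else 0)"
        using True by simp
      also have "\<dots> = (if y n \<in> set xs then f y else 0)" by (simp add: sum.delta)
      also have "y n \<in> set xs \<longleftrightarrow> rr y = v" using KP4 Om_path Om_deg Om_rng True by auto
      finally show ?thesis using True by simp
    qed simp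
    finally show "rep (pT v) f y = rep (tsum_list (map (\<lambda>l. TMul (sT G l) (sstT G l)) xs)) f y"
      by (simp add: rep_pT)
  qed
qed auto

end



context kg begin

definition Yx :: "((nat\<Rightarrow>nat) \<Rightarrow> (nat\<Rightarrow>nat) \<Rightarrow> 'a) \<Rightarrow> (nat\<Rightarrow>nat) \<Rightarrow> 'a" where
  "Yx x = (\<lambda>n. if n \<in> Nk k then x 0 n else undefined)"
definition Xy :: "((nat\<Rightarrow>nat) \<Rightarrow> 'a) \<Rightarrow> (nat\<Rightarrow>nat) \<Rightarrow> (nat\<Rightarrow>nat) \<Rightarrow> 'a" where
  "Xy y = (\<lambda>p q. suf (y q) p)"

lemma ipD: assumes "inf_path k G x"
  shows "\<And>p. p \<in> Nk k \<Longrightarrow> x p p \<in> ident G ` verts G"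
    "\<And>p q. p \<in> Nk k \<Longrightarrow> q \<in> Nk k \<Longrightarrow> p \<le> q \<Longrightarrow> x p q \<in> paths G \<and> deg G (x p q) = q - p"
    "\<And>p q t. p \<in> Nk k \<Longrightarrow> q \<in> Nk k \<Longrightarrow> t \<in> Nk k \<Longrightarrow> p \<le> q \<Longrightarrow> q \<le> t \<Longrightarrow>
         src G (x p q) = rng G (x q t) \<and> comp G (x p q) (x q t) = x p t"
proof -
  note d = assms[unfolded inf_path_def]
  show "\<And>p. p \<in> Nk k \<Longrightarrow> x p p \<in> ident G ` verts G" using d[THEN conjunct1] by blast
  show "\<And>p q. p \<in> Nk k \<Longrightarrow> q \<in> Nk k \<Longrightarrow> p \<le> q \<Longrightarrow> x p q \<in> paths G \<and> deg G (x p q) = q - p"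
    using d[THEN conjunct2, THEN conjunct1] by blast
  show "\<And>p q t. p \<in> Nk k \<Longrightarrow> q \<in> Nk k \<Longrightarrow> t \<in> Nk k \<Longrightarrow> p \<le> q \<Longrightarrow> q \<le> t \<Longrightarrow>
         src G (x p q) = rng G (x q t) \<and> comp G (x p q) (x q t) = x p t"
    using d[THEN conjunct2, THEN conjunct2] by blast
qed

lemma ip_suf: assumes "inf_path k G x" "p \<in> Nk k" "q \<in> Nk k" "p \<le> q" shows "x p q = suf (x 0 q) p"
proof -
  have a: "x 0 p \<in> paths G" "deg G (x 0 p) = p" using ipD(2)[OF assms(1) Nk_0 assms(2) zero_le_fa] by auto
  have b: "x p q \<in> paths G" using ipD(2)[OF assms(1) assms(2,3,4)] by auto
  have c: "src G (x 0 p) = rng G (x p q)" "comp G (x 0 p) (x p q) = x 0 q"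
    using ipD(3)[OF assms(1) Nk_0 assms(2,3) zero_le_fa assms(4)] by auto
  show ?thesis using fac_unique(2)[OF a(1) b c(1)] c(2) a(2) by simp
qed

lemma Yx_Om: assumes "inf_path k G x" shows "Yx x \<in> Om" "rr (Yx x) = inf_rng G x"
proof -
  show "Yx x \<in> Om"
  proof (rule OmI)
    fix n assume n: "n \<in> Nk k"
    show "Yx x n \<in> paths G" "deg G (Yx x n) = n" unfolding Yx_def using n ipD(2)[OF assms Nk_0 n zero_le_fa] by auto
  next
    fix n assume "n \<notin> Nk k" thus "Yx x n = undefined" unfolding Yx_def by simp
  next
    fix n m assume n: "n \<in> Nk k" and m: "m \<in> Nk k" and nm: "n \<le> m"
    have a: "x 0 n \<in> paths G" "deg G (x 0 n) = n" using ipD(2)[OF assms Nk_0 n zero_le_fa] by auto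
    have b: "x n m \<in> paths G" using ipD(2)[OF assms n m nm] by auto
    have c: "src G (x 0 n) = rng G (x n m)" "comp G (x 0 n) (x n m) = x 0 m"
      using ipD(3)[OF assms Nk_0 n m zero_le_fa nm] by auto
    show "Yx x n = pre (Yx x m) n" unfolding Yx_def using n m fac_unique(1)[OF a(1) b c(1)] c(2) a(2) by simp
  qed
  show "rr (Yx x) = inf_rng G x" unfolding rr_def Yx_def inf_rng_def by simp
qed

lemma Xy_ip: assumes "y \<in> Om" shows "inf_path k G (Xy y)" "Yx (Xy y) = y" "inf_rng G (Xy y) = rr y"
proof -
  have A: "\<forall>p\<in>Nk k. Xy y p p \<in> ident G ` verts G"
  proof
    fix p assume p: "p \<in> Nk k"
    have "Xy y p p = ident G (src G (y p))" unfolding Xy_def using suf_full[OF Om_path[OF assms p]] Om_deg[OF assms p] by simp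
    thus "Xy y p p \<in> ident G ` verts G" using src_in Om_path assms p by blast
  qed
  have B: "\<forall>p\<in>Nk k. \<forall>q\<in>Nk k. p \<le> q \<longrightarrow> Xy y p q \<in> paths G \<and> deg G (Xy y p q) = q - p"
  proof (intro ballI impI)
    fix p q assume "p \<in> Nk k" "q \<in> Nk k" "p \<le> q"
    thus "Xy y p q \<in> paths G \<and> deg G (Xy y p q) = q - p" unfolding Xy_def
      using fac[OF Om_path[OF assms] ] Om_deg[OF assms] by auto
  qed
  have C: "\<forall>p\<in>Nk k. \<forall>q\<in>Nk k. \<forall>t\<in>Nk k. p \<le> q \<longrightarrow> q \<le> t \<longrightarrow>
         src G (Xy y p q) = rng G (Xy y q t) \<and> comp G (Xy y p q) (Xy y q t) = Xy y p t"
  proof (intro ballI impI)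
    fix p q t assume p: "p \<in> Nk k" and q: "q \<in> Nk k" and t: "t \<in> Nk k" and pq: "p \<le> q" and qt: "q \<le> t"
    let ?L = "y t"
    have L: "?L \<in> paths G" "deg G ?L = t" using Om_path Om_deg assms t by auto
    have yq: "y q = pre ?L q" using Om_coh[OF assms qt t] .
    have pqe: "p + (q - p) = q" using fa_add_diff[OF pq] .
    have le: "p + (q - p) \<le> deg G ?L" using pqe qt L by simp
    have s1: "suf (y q) p = pre (suf ?L p) (q - p)" using suf_suf(3)[OF L(1) le] pqe yq by simp
    have s2: "suf (y t) q = suf (suf ?L p) (q - p)" using suf_suf(1)[OF L(1) le] pqe by simp
    have pt: "p \<le> deg G ?L" using pq qt L by simp
    note f1 = fac[OF L(1) pt]
    have le2: "q - p \<le> deg G (suf ?L p)" using f1 le fa_le_diff by simp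
    note f2 = fac[OF f1(2) le2]
    have "src G (Xy y p q) = src G (y q)" unfolding Xy_def using suf_src[OF Om_path[OF assms q]] Om_deg[OF assms q] pq by simp
    moreover have "rng G (Xy y q t) = src G (y q)" unfolding Xy_def
      using fac(3)[OF L(1)] qt L yq by simp
    moreover have "comp G (Xy y p q) (Xy y q t) = Xy y p t" unfolding Xy_def using s1 s2 f2(6) by simp
    ultimately show "src G (Xy y p q) = rng G (Xy y q t) \<and> comp G (Xy y p q) (Xy y q t) = Xy y p t" by simp
  qed
  show "inf_path k G (Xy y)" unfolding inf_path_def using A B C by blast
  show "Yx (Xy y) = y"
  proof (rule ext)
    fix n show "Yx (Xy y) n = y n"
      by (cases "n \<in> Nk k") (simp_all add: Yx_def Xy_def suf_0 Om_path Om_out assms)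
  qed
  show "inf_rng G (Xy y) = rr y" unfolding inf_rng_def rr_def Xy_def using suf_0 Om_path assms by simp
qed

lemma Yx_inf_eq: assumes "inf_path k G x" "inf_path k G x'" "Yx x = Yx x'" shows "inf_eq k x x'"
  unfolding inf_eq_def
proof (intro ballI impI)
  fix p q assume p: "p \<in> Nk k" and q: "q \<in> Nk k" and pq: "p \<le> q"
  have "x 0 q = x' 0 q" using fun_cong[OF assms(3), of q] q by (simp add: Yx_def)
  thus "x p q = x' p q" using ip_suf[OF assms(1) p q pq] ip_suf[OF assms(2) p q pq] by simp
qed

lemma inf_eq_Yx: assumes "inf_eq k x x'" shows "Yx x = Yx x'"
  using assms unfolding inf_eq_def Yx_def by (auto simp: fun_eq_iff zero_le_fa)

lemma concat_Yx: assumes "inf_path k G x" "a \<in> paths G" "inf_rng G x = src G a"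
  shows "inf_path k G (inf_concat k G a x)" "Yx (inf_concat k G a x) = cat a (Yx x)"
proof -
  let ?z = "Yx x"
  have z: "?z \<in> Om" "rr ?z = src G a" using Yx_Om assms by auto
  let ?w = "cat a ?z"
  have w: "?w \<in> Om" using cat_Om assms z by simp
  have da: "deg G a \<in> Nk k" using deg_in assms by simp
  have ex: "\<exists>y. inf_path k G y \<and> (\<forall>n\<in>Nk k. deg G a \<le> n \<longrightarrow> y 0 n = comp G a (x 0 (n - deg G a)))"
  proof (intro exI conjI)
    show "inf_path k G (Xy ?w)" using Xy_ip w by simp
    show "\<forall>n\<in>Nk k. deg G a \<le> n \<longrightarrow> Xy ?w 0 n = comp G a (x 0 (n - deg G a))"
    proof (intro ballI impI)
      fix n assume n: "n \<in> Nk k" and le: "deg G a \<le> n"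
      have nd: "n - deg G a \<in> Nk k" using n by auto
      have "Xy ?w 0 n = ?w n" unfolding Xy_def using suf_0 Om_path w n by simp
      also have "\<dots> = ?w (deg G a + (n - deg G a))" using fa_add_diff[OF le] by simp
      also have "\<dots> = comp G a (?z (n - deg G a))" using cat_ge assms z nd by simp
      finally show "Xy ?w 0 n = comp G a (x 0 (n - deg G a))" using nd by (simp add: Yx_def)
    qed
  qed
  have sp: "inf_path k G (inf_concat k G a x) \<and>
      (\<forall>n\<in>Nk k. deg G a \<le> n \<longrightarrow> inf_concat k G a x 0 n = comp G a (x 0 (n - deg G a)))"
    unfolding inf_concat_def by (rule someI_ex[OF ex])
  show "inf_path k G (inf_concat k G a x)" using sp by simp
  show "Yx (inf_concat k G a x) = ?w"
  proof (rule Om_eqI)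
    show "Yx (inf_concat k G a x) \<in> Om" using Yx_Om sp by simp
    show "?w \<in> Om" by (rule w)
    fix n assume n: "n \<in> Nk k"
    have dn: "deg G a + n \<in> Nk k" using n da by auto
    have "Yx (inf_concat k G a x) n = pre (Yx (inf_concat k G a x) (deg G a + n)) n"
      using Om_coh[OF Yx_Om(1)[of "inf_concat k G a x"] fa_le_add2 dn] sp by simp
    also have "Yx (inf_concat k G a x) (deg G a + n) = comp G a (x 0 n)"
      using sp dn fa_le_add[of "deg G a" n] fa_add_diff2 by (simp add: Yx_def)
    also have "comp G a (x 0 n) = ?w (deg G a + n)" using cat_ge assms z n by (simp add: Yx_def)
    also have "pre (?w (deg G a + n)) n = ?w n" using Om_coh[OF w fa_le_add2 dn] by simp
    finally show "Yx (inf_concat k G a x) n = ?w n" .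
  qed
qed

definition P3 :: "'a \<Rightarrow> 'a \<Rightarrow> bool" where
  "P3 al be \<longleftrightarrow> (\<forall>z\<in>Om. rr z = src G al \<longrightarrow> cat al z = cat be z)"

lemma P3_iff: assumes "al \<in> paths G" "be \<in> paths G" "src G al = src G be"
  shows "P3 al be \<longleftrightarrow> (\<forall>x. inf_path k G x \<and> inf_rng G x = src G al \<longrightarrow>
             inf_eq k (inf_concat k G al x) (inf_concat k G be x))"
proof
  assume h: "P3 al be"
  show "\<forall>x. inf_path k G x \<and> inf_rng G x = src G al \<longrightarrow> inf_eq k (inf_concat k G al x) (inf_concat k G be x)"
  proof (intro allI impI)
    fix x assume x: "inf_path k G x \<and> inf_rng G x = src G al"
    have z: "Yx x \<in> Om" "rr (Yx x) = src G al" using Yx_Om x by auto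
    have "cat al (Yx x) = cat be (Yx x)" using h z unfolding P3_def by blast
    have r2: "inf_rng G x = src G be" using x assms by simp
    show "inf_eq k (inf_concat k G al x) (inf_concat k G be x)"
      apply (rule Yx_inf_eq[OF concat_Yx(1)[OF _ assms(1)] concat_Yx(1)[OF _ assms(2)]])
      using x r2 concat_Yx(2)[OF _ assms(1)] concat_Yx(2)[OF _ assms(2)] \<open>cat al (Yx x) = cat be (Yx x)\<close> by auto
  qed
next
  assume h: "\<forall>x. inf_path k G x \<and> inf_rng G x = src G al \<longrightarrow> inf_eq k (inf_concat k G al x) (inf_concat k G be x)"
  show "P3 al be" unfolding P3_def
  proof (intro ballI impI)
    fix z assume z: "z \<in> Om" "rr z = src G al"
    note X = Xy_ip[OF z(1)]
    have "inf_eq k (inf_concat k G al (Xy z)) (inf_concat k G be (Xy z))" using h X z by simp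
    hence "Yx (inf_concat k G al (Xy z)) = Yx (inf_concat k G be (Xy z))" by (rule inf_eq_Yx)
    moreover have "Yx (inf_concat k G al (Xy z)) = cat al z" using concat_Yx(2)[OF X(1) assms(1)] X z by simp
    moreover have "Yx (inf_concat k G be (Xy z)) = cat be z" using concat_Yx(2)[OF X(1) assms(2)] X z assms by simp
    ultimately show "cat al z = cat be z" by simp
  qed
qed

lemma K: assumes "P3 al be" "al \<in> paths G" "be \<in> paths G" "src G al = src G be"
  "g \<in> paths G" "rng G g = src G al" "p \<le> deg G al + deg G g" "p \<le> deg G be + deg G g"
  shows "pre (comp G al g) p = pre (comp G be g) p"
proof -
  obtain z where z: "z \<in> Om" "rr z = src G g" using Om_exists src_in assms by blast
  have w: "cat g z \<in> Om" "rr (cat g z) = src G al" using cat_Om cat_rr z assms by auto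
  have "cat al (cat g z) = cat be (cat g z)" using assms(1) w unfolding P3_def by blast
  moreover have "cat al (cat g z) = cat (comp G al g) z" using cat_cat[OF assms(2) assms(5) _ z(1)] z assms by simp
  moreover have "cat be (cat g z) = cat (comp G be g) z" using cat_cat[OF assms(3) assms(5) _ z(1)] z assms by simp
  ultimately have e: "cat (comp G al g) z = cat (comp G be g) z" by simp
  have "cat (comp G al g) z p = pre (comp G al g) p"
    using cat_le[of "comp G al g" z p] comp_in z assms by simp
  moreover have "cat (comp G be g) z p = pre (comp G be g) p"
    using cat_le[of "comp G be g" z p] comp_in z assms by simp
  ultimately show ?thesis using e by simp
qed

lemma one_to_P3:
  assumes "al \<in> paths G" "be \<in> paths G" "src G al = src G be"
  and H: "\<forall>g\<in>paths G. rng G g = src G al \<longrightarrow>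
             kp_eq k G (TMul (sT G (comp G al g)) (sstT G (comp G al g)))
                       (TMul (sT G (comp G be g)) (sstT G (comp G be g)) :: ('v,'a,'r::comm_ring_1) kpterm)"
  shows "P3 al be" unfolding P3_def
proof (intro ballI impI)
  fix z assume z: "z \<in> Om" "rr z = src G al"
  show "cat al z = cat be z"
  proof (rule ccontr)
    assume ne: "cat al z \<noteq> cat be z"
    have ca: "cat al z \<in> Om" "cat be z \<in> Om" using cat_Om z assms by auto
    obtain n where n: "n \<in> Nk k" "cat al z n \<noteq> cat be z n" using Om_eqI[OF ca] ne by blast
    let ?g = "z n"
    have g: "?g \<in> paths G" "rng G ?g = src G al" using Om_path Om_rng z n by auto
    have ag: "comp G al ?g \<in> paths G" "comp G be ?g \<in> paths G" using comp_in g assms by auto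
    have kq: "kp_eq k G (TMul (sT G (comp G al ?g)) (sstT G (comp G al ?g)))
                       (TMul (sT G (comp G be ?g)) (sstT G (comp G be ?g)) :: ('v,'a,'r) kpterm)"
      using H g by blast
    have eq: "rep (TMul (sT G (comp G al ?g)) (sstT G (comp G al ?g)) :: ('v,'a,'r) kpterm)
        = rep (TMul (sT G (comp G be ?g)) (sstT G (comp G be ?g)) :: ('v,'a,'r) kpterm)"
      by (rule sound[OF kq])
    have e: "(\<lambda>y. if y \<in> Om \<and> y (deg G (comp G al ?g)) = comp G al ?g then (f::_ \<Rightarrow> 'r) y else 0)
          = (\<lambda>y. if y \<in> Om \<and> y (deg G (comp G be ?g)) = comp G be ?g then f y else 0)" for f
      using fun_cong[OF eq, of f] unfolding rep_C[OF ag(1)] rep_C[OF ag(2)] .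
    let ?f = "\<lambda>y. if y = cat al z then (1::'r) else 0"
    have "cat al z (deg G (comp G al ?g)) = comp G al ?g"
      using cat_ge[OF assms(1) z(1) _ n(1)] Om_deg[OF z(1) n(1)] z g assms by simp
    hence "(if cat al z \<in> Om \<and> cat al z (deg G (comp G be ?g)) = comp G be ?g then ?f (cat al z) else 0) = 1"
      using fun_cong[OF e[of ?f], of "cat al z"] ca by simp
    hence h: "cat al z (deg G be + n) = cat be z (deg G be + n)"
      using cat_ge[OF assms(2) z(1) _ n(1)] Om_deg[OF z(1) n(1)] z g assms by (simp split: if_splits)
    have dn: "deg G be + n \<in> Nk k" using deg_in assms n(1) by auto
    have "cat al z n = cat be z n"
      using Om_coh[OF ca(1) fa_le_add2 dn] Om_coh[OF ca(2) fa_le_add2 dn] h by simp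
    thus False using n by simp
  qed
qed

end



fun pl :: "('g, 'r) fterm list \<Rightarrow> ('g, 'r) fterm" where
  "pl [] = TZero"
| "pl [a] = a"
| "pl (a # b # xs) = TMul a (pl (b # xs))"

context kg begin

abbreviation keq :: "('v, 'a, 'r::comm_ring_1) kpterm \<Rightarrow> ('v, 'a, 'r) kpterm \<Rightarrow> bool" (infix "\<approx>" 50)
  where "a \<approx> b \<equiv> kp_eq k G a b"

lemma e_refl[simp]: "a \<approx> a" by (rule kp_eq.refl)
lemma e_sym: "a \<approx> b \<Longrightarrow> b \<approx> a" by (rule kp_eq.sym)
lemma e_trans[trans]: "a \<approx> b \<Longrightarrow> b \<approx> c \<Longrightarrow> a \<approx> c" by (rule kp_eq.trans)
lemma e_eq_trans[trans]: "a = b \<Longrightarrow> b \<approx> c \<Longrightarrow> a \<approx> c" by simp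
lemma e_trans_eq[trans]: "a \<approx> b \<Longrightarrow> b = c \<Longrightarrow> a \<approx> c" by simp
lemma mul_cong: "a \<approx> a' \<Longrightarrow> b \<approx> b' \<Longrightarrow> TMul a b \<approx> TMul a' b'" by (rule kp_eq.cong_mul)
lemma mul_cong_l: "a \<approx> a' \<Longrightarrow> TMul a b \<approx> TMul a' b" by (rule kp_eq.cong_mul) auto
lemma mul_cong_r: "b \<approx> b' \<Longrightarrow> TMul a b \<approx> TMul a b'" by (rule kp_eq.cong_mul) auto
lemma add_cong: "a \<approx> a' \<Longrightarrow> b \<approx> b' \<Longrightarrow> TAdd a b \<approx> TAdd a' b'" by (rule kp_eq.cong_add)
lemma massoc: "TMul (TMul a b) c \<approx> TMul a (TMul b c)" by (rule kp_eq.mul_assoc)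

lemma add_zero_l: "TAdd TZero a \<approx> a"
proof -
  have "TAdd TZero a \<approx> TAdd a TZero" by (rule kp_eq.add_comm)
  also have "\<dots> \<approx> a" by (rule kp_eq.add_zero)
  finally show ?thesis .
qed

lemma neg_unique: assumes "TAdd x y \<approx> TZero" shows "x \<approx> TNeg y"
proof -
  have "x \<approx> TAdd x TZero" by (rule e_sym, rule kp_eq.add_zero)
  also have "\<dots> \<approx> TAdd x (TAdd y (TNeg y))" by (rule add_cong, simp, rule e_sym, rule kp_eq.add_neg)
  also have "\<dots> \<approx> TAdd (TAdd x y) (TNeg y)" by (rule e_sym, rule kp_eq.add_assoc)
  also have "\<dots> \<approx> TAdd TZero (TNeg y)" by (rule add_cong[OF assms], simp)
  also have "\<dots> \<approx> TNeg y" by (rule add_zero_l)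
  finally show ?thesis .
qed

lemma idem_zero: assumes "x \<approx> TAdd x x" shows "x \<approx> TZero"
proof -
  have "TAdd x x \<approx> TAdd x TZero"
  proof -
    have "TAdd x TZero \<approx> x" by (rule kp_eq.add_zero)
    also have "\<dots> \<approx> TAdd x x" by (rule assms)
    finally show ?thesis by (rule e_sym)
  qed
  have "TZero \<approx> TAdd x (TNeg x)" by (rule e_sym, rule kp_eq.add_neg)
  also have "\<dots> \<approx> TAdd (TAdd x x) (TNeg x)" by (rule add_cong[OF assms], simp)
  also have "\<dots> \<approx> TAdd x (TAdd x (TNeg x))" by (rule kp_eq.add_assoc)
  also have "\<dots> \<approx> TAdd x TZero" by (rule add_cong, simp, rule kp_eq.add_neg)
  also have "\<dots> \<approx> x" by (rule kp_eq.add_zero)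
  finally show ?thesis by (rule e_sym)
qed

lemma mul_zero_r: "TMul a TZero \<approx> TZero"
proof (rule idem_zero)
  have "TMul a TZero \<approx> TMul a (TAdd TZero TZero)" by (rule mul_cong_r, rule e_sym, rule kp_eq.add_zero)
  also have "\<dots> \<approx> TAdd (TMul a TZero) (TMul a TZero)" by (rule kp_eq.distrib_l)
  finally show "TMul a TZero \<approx> TAdd (TMul a TZero) (TMul a TZero)" .
qed

lemma mul_zero_l: "TMul TZero a \<approx> TZero"
proof (rule idem_zero)
  have "TMul TZero a \<approx> TMul (TAdd TZero TZero) a" by (rule mul_cong_l, rule e_sym, rule kp_eq.add_zero)
  also have "\<dots> \<approx> TAdd (TMul TZero a) (TMul TZero a)" by (rule kp_eq.distrib_r)
  finally show "TMul TZero a \<approx> TAdd (TMul TZero a) (TMul TZero a)" .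
qed

lemma mul_neg_r: "TMul a (TNeg t) \<approx> TNeg (TMul a t)"
proof (rule neg_unique)
  have "TAdd (TMul a (TNeg t)) (TMul a t) \<approx> TMul a (TAdd (TNeg t) t)" by (rule e_sym, rule kp_eq.distrib_l)
  also have "\<dots> \<approx> TMul a (TAdd t (TNeg t))" by (rule mul_cong_r, rule kp_eq.add_comm)
  also have "\<dots> \<approx> TMul a TZero" by (rule mul_cong_r, rule kp_eq.add_neg)
  also have "\<dots> \<approx> TZero" by (rule mul_zero_r)
  finally show "TAdd (TMul a (TNeg t)) (TMul a t) \<approx> TZero" .
qed

lemma mul_neg_l: "TMul (TNeg t) a \<approx> TNeg (TMul t a)"
proof (rule neg_unique)
  have "TAdd (TMul (TNeg t) a) (TMul t a) \<approx> TMul (TAdd (TNeg t) t) a" by (rule e_sym, rule kp_eq.distrib_r)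
  also have "\<dots> \<approx> TMul (TAdd t (TNeg t)) a" by (rule mul_cong_l, rule kp_eq.add_comm)
  also have "\<dots> \<approx> TMul TZero a" by (rule mul_cong_l, rule kp_eq.add_neg)
  also have "\<dots> \<approx> TZero" by (rule mul_zero_l)
  finally show "TAdd (TMul (TNeg t) a) (TMul t a) \<approx> TZero" .
qed

lemma tsum_mul_l: "TMul a (tsum_list ts) \<approx> tsum_list (map (TMul a) ts)"
proof (induction ts)
  case Nil show ?case by (simp add: mul_zero_r)
next
  case (Cons t ts)
  have "TMul a (tsum_list (t # ts)) \<approx> TAdd (TMul a t) (TMul a (tsum_list ts))" by (simp add: kp_eq.distrib_l)
  also have "\<dots> \<approx> TAdd (TMul a t) (tsum_list (map (TMul a) ts))" by (rule add_cong, simp, rule Cons)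
  finally show ?case by simp
qed

lemma tsum_mul_r: "TMul (tsum_list ts) b \<approx> tsum_list (map (\<lambda>t. TMul t b) ts)"
proof (induction ts)
  case Nil show ?case by (simp add: mul_zero_l)
next
  case (Cons t ts)
  have "TMul (tsum_list (t # ts)) b \<approx> TAdd (TMul t b) (TMul (tsum_list ts) b)" by (simp add: kp_eq.distrib_r)
  also have "\<dots> \<approx> TAdd (TMul t b) (tsum_list (map (\<lambda>t. TMul t b) ts))" by (rule add_cong, simp, rule Cons)
  finally show ?case by simp
qed

lemma tsum_cong: "(\<And>x. x \<in> set xs \<Longrightarrow> f x \<approx> g x) \<Longrightarrow> tsum_list (map f xs) \<approx> tsum_list (map g xs)"
proof (induction xs)
  case Nil show ?case by simp
next
  case (Cons x xs)
  have "f x \<approx> g x" using Cons.prems by simp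
  moreover have "tsum_list (map f xs) \<approx> tsum_list (map g xs)" using Cons by simp
  ultimately show ?case using add_cong by simp
qed

lemma tsum_mv: "tsum_list (us @ t # vs) \<approx> TAdd t (tsum_list (us @ vs))"
proof (induction us)
  case Nil show ?case by simp
next
  case (Cons u us)
  have "tsum_list ((u # us) @ t # vs) = TAdd u (tsum_list (us @ t # vs))" by simp
  also have "\<dots> \<approx> TAdd u (TAdd t (tsum_list (us @ vs)))" by (rule add_cong, simp, rule Cons)
  also have "\<dots> \<approx> TAdd (TAdd u t) (tsum_list (us @ vs))" by (rule e_sym, rule kp_eq.add_assoc)
  also have "\<dots> \<approx> TAdd (TAdd t u) (tsum_list (us @ vs))" by (rule add_cong, rule kp_eq.add_comm, simp)
  also have "\<dots> \<approx> TAdd t (TAdd u (tsum_list (us @ vs)))" by (rule kp_eq.add_assoc)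
  finally show ?case by simp
qed

lemma tsum_perm: "distinct ts \<Longrightarrow> distinct us \<Longrightarrow> set ts = set us \<Longrightarrow> tsum_list ts \<approx> tsum_list us"
proof (induction ts arbitrary: us)
  case Nil thus ?case by simp
next
  case (Cons t ts)
  have "t \<in> set (t # ts)" by simp
  hence "t \<in> set us" unfolding Cons.prems(3) .
  then obtain u1 u2 where us: "us = u1 @ t # u2" by (meson split_list)
  have d: "t \<notin> set ts" "distinct ts" using Cons.prems(1) by auto
  have "set ts = insert t (set ts) - {t}" using d by simp
  also have "\<dots> = set us - {t}" using Cons.prems(3) by simp
  also have "set us - {t} = set (u1 @ u2)" using Cons.prems(2) unfolding us by auto
  finally have e: "set ts = set (u1 @ u2)" .
  have dd: "distinct (u1 @ u2)" using Cons.prems(2) unfolding us by simp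
  have ih: "tsum_list ts \<approx> tsum_list (u1 @ u2)" by (rule Cons.IH[OF d(2) dd e])
  have "tsum_list (t # ts) \<approx> TAdd t (tsum_list (u1 @ u2))" unfolding tsum_list.simps by (rule add_cong[OF e_refl ih])
  also have "\<dots> \<approx> tsum_list us" unfolding us by (rule e_sym, rule tsum_mv)
  finally show ?case .
qed

section \<open>Products as lists\<close>

lemma pl_app: "xs \<noteq> [] \<Longrightarrow> ys \<noteq> [] \<Longrightarrow> pl (xs @ ys) \<approx> TMul (pl xs) (pl ys)"
proof (induction xs rule: pl.induct)
  case 1 thus ?case by simp
next
  case (2 a) thus ?case by (cases ys) auto
next
  case (3 a b xs)
  have "pl ((a # b # xs) @ ys) = TMul a (pl ((b # xs) @ ys))" by simp
  also have "\<dots> \<approx> TMul a (TMul (pl (b # xs)) (pl ys))" using 3 by (intro mul_cong_r) simp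
  also have "\<dots> \<approx> TMul (TMul a (pl (b # xs))) (pl ys)" by (rule e_sym, rule massoc)
  finally show ?case by simp
qed

lemma pl_sub: assumes "ys \<noteq> []" "ys' \<noteq> []" "pl ys \<approx> pl ys'"
  shows "pl (xs @ ys @ zs) \<approx> pl (xs @ ys' @ zs)"
proof -
  have A: "pl (ys @ zs) \<approx> pl (ys' @ zs)"
  proof (cases "zs = []")
    case True thus ?thesis using assms by simp
  next
    case False
    have "pl (ys @ zs) \<approx> TMul (pl ys) (pl zs)" by (rule pl_app[OF assms(1) False])
    also have "\<dots> \<approx> TMul (pl ys') (pl zs)" by (rule mul_cong_l[OF assms(3)])
    also have "\<dots> \<approx> pl (ys' @ zs)" by (rule e_sym, rule pl_app[OF assms(2) False])
    finally show ?thesis .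
  qed
  show ?thesis
  proof (cases "xs = []")
    case True thus ?thesis using A by simp
  next
    case False
    have "pl (xs @ ys @ zs) \<approx> TMul (pl xs) (pl (ys @ zs))" by (rule pl_app[OF False]) (use assms in simp)
    also have "\<dots> \<approx> TMul (pl xs) (pl (ys' @ zs))" by (rule mul_cong_r[OF A])
    also have "\<dots> \<approx> pl (xs @ ys' @ zs)" by (rule e_sym, rule pl_app[OF False]) (use assms in simp)
    finally show ?thesis .
  qed
qed

lemma pl_zero: "pl (xs @ [TZero] @ zs) \<approx> TZero"
proof -
  have A: "pl ([TZero] @ zs) \<approx> TZero"
    by (cases zs) (auto simp: mul_zero_l)
  show ?thesis
  proof (cases "xs = []")
    case True thus ?thesis using A by simp
  next
    case False
    have "pl (xs @ [TZero] @ zs) \<approx> TMul (pl xs) (pl ([TZero] @ zs))" by (rule pl_app[OF False]) simp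
    also have "\<dots> \<approx> TMul (pl xs) TZero" by (rule mul_cong_r[OF A])
    also have "\<dots> \<approx> TZero" by (rule mul_zero_r)
    finally show ?thesis .
  qed
qed

lemma pl2: "pl [a, b] = TMul a b" by simp
lemma pl3: "pl [a, b, c] = TMul a (TMul b c)" by simp
lemma pl4: "pl [a, b, c, d] = TMul a (TMul b (TMul c d))" by simp

lemma pl_2_2: "TMul (TMul a b) (TMul c d) \<approx> pl [a, b, c, d]"
  using pl_app[of "[a,b]" "[c,d]"] by (simp add: e_sym)
lemma pl_2_1: "TMul (TMul a b) c \<approx> pl [a, b, c]" by (simp add: massoc)

end



context kg begin
context fixes dummy :: "'r::comm_ring_1" begin

abbreviation S :: "'a \<Rightarrow> ('v, 'a, 'r) kpterm" where "S l \<equiv> sT G l"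
abbreviation St :: "'a \<Rightarrow> ('v, 'a, 'r) kpterm" where "St l \<equiv> sstT G l"
abbreviation Pp :: "'v \<Rightarrow> ('v, 'a, 'r) kpterm" where "Pp v \<equiv> pT v"
abbreviation Z :: "('v, 'a, 'r) kpterm" where "Z \<equiv> TZero"

lemma KP1i: "v \<in> verts G \<Longrightarrow> TMul (Pp v) (Pp v) \<approx> Pp v" by (rule kp_eq.KP1_idem)
lemma KP1o: "v \<in> verts G \<Longrightarrow> w \<in> verts G \<Longrightarrow> v \<noteq> w \<Longrightarrow> TMul (Pp v) (Pp w) \<approx> Z" by (rule kp_eq.KP1_orth)

lemma contr: "TMul (a::('v,'a,'r) kpterm) b \<approx> c \<Longrightarrow> pl (xs @ a # b # zs) \<approx> pl (xs @ c # zs)"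
  using pl_sub[of "[a,b]" "[c]" xs zs] by simp
lemma subst1: "(a::('v,'a,'r) kpterm) \<approx> c \<Longrightarrow> pl (xs @ a # zs) \<approx> pl (xs @ c # zs)"
  using pl_sub[of "[a]" "[c]" xs zs] by simp
lemma contr0: "TMul (a::('v,'a,'r) kpterm) b \<approx> TZero \<Longrightarrow> pl (xs @ a # b # zs) \<approx> TZero"
  using contr[of a b TZero xs zs] pl_zero[of xs zs] e_trans by simp

lemma pl_2_2_2: "TMul (TMul (TMul (a::('v,'a,'r) kpterm) b) (TMul c d)) (TMul e f) \<approx> pl [a, b, c, d, e, f]"
proof -
  have "TMul (TMul (TMul a b) (TMul c d)) (TMul e f) \<approx> TMul (pl [a,b,c,d]) (TMul e f)"
    by (rule mul_cong_l, rule pl_2_2)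
  also have "\<dots> = TMul (pl [a,b,c,d]) (pl [e,f])" by simp
  also have "\<dots> \<approx> pl ([a,b,c,d] @ [e,f])" by (rule e_sym, rule pl_app) auto
  finally show ?thesis by simp
qed

lemma deg0_id: "l \<in> paths G \<Longrightarrow> deg G l = 0 \<Longrightarrow> l = ident G (src G l)"
  using deg0_ident deg0_src by metis

lemma sT0: "deg G l = 0 \<Longrightarrow> S l = Pp (src G l)" by (simp add: sT_def pT_def)
lemma sstT0: "deg G l = 0 \<Longrightarrow> St l = Pp (src G l)" by (simp add: sstT_def pT_def)

lemma B1a: assumes "l \<in> paths G" shows "TMul (Pp (rng G l)) (S l) \<approx> S l"
proof (cases "deg G l = 0")
  case True
  have "rng G l = src G l" using deg0_src assms True by simp
  thus ?thesis using sT0[OF True] KP1i src_in assms by simp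
qed (rule kp_eq.KP2_pr_s[OF assms])

lemma B1b: assumes "l \<in> paths G" shows "TMul (S l) (Pp (src G l)) \<approx> S l"
proof (cases "deg G l = 0")
  case True thus ?thesis using sT0[OF True] KP1i src_in assms by simp
qed (rule kp_eq.KP2_s_ps[OF assms])

lemma B1c: assumes "l \<in> paths G" shows "TMul (Pp (src G l)) (St l) \<approx> St l"
proof (cases "deg G l = 0")
  case True thus ?thesis using sstT0[OF True] KP1i src_in assms by simp
qed (rule kp_eq.KP2_ps_sst[OF assms])

lemma B1d: assumes "l \<in> paths G" shows "TMul (St l) (Pp (rng G l)) \<approx> St l"
proof (cases "deg G l = 0")
  case True
  have "rng G l = src G l" using deg0_src assms True by simp
  thus ?thesis using sstT0[OF True] KP1i src_in assms by simp
qed (rule kp_eq.KP2_sst_pr[OF assms])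

lemma B2: assumes "l \<in> paths G" "m \<in> paths G" "src G l = rng G m"
  shows "TMul (S l) (S m) \<approx> S (comp G l m)"
proof (cases "deg G l = 0")
  case True
  have l: "l = ident G (rng G m)" using deg0_id[OF assms(1) True] assms by simp
  have "comp G l m = m" using comp_id_l[OF assms(2)] l by simp
  moreover have "S l = Pp (rng G m)" using sT0[OF True] assms by simp
  ultimately show ?thesis using B1a[OF assms(2)] by simp
next
  case F: False
  show ?thesis
  proof (cases "deg G m = 0")
    case True
    have m: "m = ident G (src G l)" using deg0_ident[OF assms(2) True] assms by simp
    have "comp G l m = l" using comp_id_r[OF assms(1)] m by simp
    moreover have "S m = Pp (src G l)" using sT0[OF True] deg0_src[OF assms(2) True] assms by simp
    ultimately show ?thesis using B1b[OF assms(1)] by simp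
  next
    case False show ?thesis by (rule kp_eq.KP2_s[OF assms(1,2) F False assms(3)[symmetric]])
  qed
qed

lemma B3: assumes "l \<in> paths G" "m \<in> paths G" "src G l = rng G m"
  shows "TMul (St m) (St l) \<approx> St (comp G l m)"
proof (cases "deg G l = 0")
  case True
  have l: "l = ident G (rng G m)" using deg0_id[OF assms(1) True] assms by simp
  have "comp G l m = m" using comp_id_l[OF assms(2)] l by simp
  moreover have "St l = Pp (rng G m)" using sstT0[OF True] assms by simp
  ultimately show ?thesis using B1d[OF assms(2)] by simp
next
  case F: False
  show ?thesis
  proof (cases "deg G m = 0")
    case True
    have m: "m = ident G (src G l)" using deg0_ident[OF assms(2) True] assms by simp
    have "comp G l m = l" using comp_id_r[OF assms(1)] m by simp
    moreover have "St m = Pp (src G l)" using sstT0[OF True] deg0_src[OF assms(2) True] assms by simp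
    ultimately show ?thesis using B1c[OF assms(1)] by simp
  next
    case False show ?thesis by (rule kp_eq.KP2_sst[OF assms(1,2) F False assms(3)[symmetric]])
  qed
qed

lemma B4: assumes "l \<in> paths G" "m \<in> paths G" "deg G l = deg G m"
  shows "TMul (St l) (S m) \<approx> (if l = m then Pp (src G l) else TZero)"
proof (cases "deg G l = 0")
  case True
  have m0: "deg G m = 0" using True assms by simp
  have e: "St l = Pp (src G l)" "S m = Pp (src G m)" using sstT0[OF True] sT0[OF m0] by auto
  show ?thesis
  proof (cases "l = m")
    case True thus ?thesis using e KP1i src_in assms by simp
  next
    case False
    have "src G l \<noteq> src G m" using False deg0_id[OF assms(1) True] deg0_id[OF assms(2) m0] by metis
    thus ?thesis using e False KP1o src_in assms by simp
  qed
next
  case False show ?thesis by (rule kp_eq.KP3[OF assms(1,2) False assms(3)])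
qed

lemma distinct_single: "distinct xs \<Longrightarrow> set xs = {a} \<Longrightarrow> xs = [a]"
proof -
  assume d: "distinct xs" and s: "set xs = {a}"
  have "length xs = 1" using distinct_card[OF d] s by simp
  then obtain b where "xs = [b]" by (cases xs) auto
  thus ?thesis using s by simp
qed

lemma E1: assumes "v \<in> verts G" "n \<in> Nk k" "distinct xs" "set xs = {l\<in>paths G. rng G l = v \<and> deg G l = n}"
  shows "Pp v \<approx> tsum_list (map (\<lambda>l. TMul (S l) (St l)) xs)"
proof (cases "n = 0")
  case True
  have "{l\<in>paths G. rng G l = v \<and> deg G l = n} = {ident G v}"
  proof
    show "{l\<in>paths G. rng G l = v \<and> deg G l = n} \<subseteq> {ident G v}" using deg0_ident True by auto
    show "{ident G v} \<subseteq> {l\<in>paths G. rng G l = v \<and> deg G l = n}" using ident_in assms True by simp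
  qed
  hence xs: "xs = [ident G v]" using distinct_single assms by simp
  have s: "S (ident G v) = Pp v" "St (ident G v) = Pp v" using sT0 sstT0 assms by simp_all
  have "Pp v \<approx> TMul (Pp v) (Pp v)" by (rule e_sym, rule KP1i[OF assms(1)])
  also have "\<dots> \<approx> TAdd (TMul (Pp v) (Pp v)) TZero" by (rule e_sym, rule kp_eq.add_zero)
  finally show ?thesis using xs s by simp
next
  case False show ?thesis by (rule kp_eq.KP4[OF assms(1,2) False assms(3,4)])
qed

abbreviation C :: "'a \<Rightarrow> ('v, 'a, 'r) kpterm" where "C l \<equiv> TMul (S l) (St l)"

lemma E2: assumes "la \<in> paths G" "mu \<in> paths G" "src G la = src G mu" "n \<in> Nk k" "distinct xs"
  "set xs = {d\<in>paths G. rng G d = src G la \<and> deg G d = n}"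
  shows "TMul (S la) (St mu) \<approx> tsum_list (map (\<lambda>d. TMul (S (comp G la d)) (St (comp G mu d))) xs)"
proof -
  have "TMul (S la) (St mu) \<approx> TMul (S la) (TMul (Pp (src G la)) (St mu))"
    using B1c[OF assms(2)] assms(3) by (simp add: mul_cong_r e_sym)
  also have "\<dots> \<approx> TMul (S la) (TMul (tsum_list (map C xs)) (St mu))"
    by (rule mul_cong_r, rule mul_cong_l, rule E1[OF src_in[OF assms(1)] assms(4,5,6)])
  also have "\<dots> \<approx> TMul (S la) (tsum_list (map (\<lambda>t. TMul t (St mu)) (map C xs)))"
    by (rule mul_cong_r, rule tsum_mul_r)
  also have "\<dots> \<approx> tsum_list (map (TMul (S la)) (map (\<lambda>t. TMul t (St mu)) (map C xs)))"
    by (rule tsum_mul_l)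
  also have "\<dots> = tsum_list (map (\<lambda>d. TMul (S la) (TMul (C d) (St mu))) xs)" by (induct xs) simp_all
  also have "\<dots> \<approx> tsum_list (map (\<lambda>d. TMul (S (comp G la d)) (St (comp G mu d))) xs)"
  proof (rule tsum_cong)
    fix d assume "d \<in> set xs"
    hence d: "d \<in> paths G" "rng G d = src G la" "rng G d = src G mu" using assms by auto
    have "TMul (S la) (TMul (C d) (St mu)) \<approx> pl [S la, S d, St d, St mu]"
      by (simp add: mul_cong_r massoc)
    also have "\<dots> \<approx> pl [S la, S d, St (comp G mu d)]"
      using contr[OF B3[OF assms(2) d(1) d(3)[symmetric]], of "[S la, S d]" "[]"] by simp
    also have "\<dots> \<approx> pl [S (comp G la d), St (comp G mu d)]"
      using contr[OF B2[OF assms(1) d(1) d(2)[symmetric]], of "[]" "[St (comp G mu d)]"] by simp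
    finally show "TMul (S la) (TMul (C d) (St mu)) \<approx> TMul (S (comp G la d)) (St (comp G mu d))" by simp
  qed
  finally show ?thesis .
qed

lemma M1: assumes "nu \<in> paths G" "mu \<in> paths G" "deg G mu \<le> deg G nu"
  shows "TMul (St nu) (C mu) \<approx> (if pre nu (deg G mu) = mu then St nu else TZero)"
proof -
  note f = fac[OF assms(1) assms(3)]
  let ?r = "pre nu (deg G mu)" and ?t = "suf nu (deg G mu)"
  have sn: "TMul (St ?t) (St ?r) \<approx> St nu" using B3[OF f(1,2,3)] f(6) by simp
  have "TMul (St nu) (C mu) \<approx> TMul (TMul (St ?t) (St ?r)) (C mu)" by (rule mul_cong_l, rule e_sym, rule sn)
  also have "\<dots> \<approx> pl [St ?t, St ?r, S mu, St mu]" by (rule pl_2_2)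
  finally have A: "TMul (St nu) (C mu) \<approx> pl [St ?t, St ?r, S mu, St mu]" .
  note b4 = B4[OF f(1) assms(2)] f(4)
  show ?thesis
  proof (cases "?r = mu")
    case True
    have "pl [St ?t, St ?r, S mu, St mu] \<approx> pl [St ?t, Pp (src G mu), St mu]"
      using contr[of "St ?r" "S mu" "Pp (src G mu)" "[St ?t]" "[St mu]"] b4 True by simp
    also have "\<dots> \<approx> pl [St ?t, St mu]"
      using contr[OF B1c[OF assms(2)], of "[St ?t]" "[]"] by simp
    also have "\<dots> \<approx> St nu" using sn True by simp
    finally show ?thesis using A True e_trans by simp
  next
    case False
    have "pl [St ?t, St ?r, S mu, St mu] \<approx> TZero"
      using contr0[of "St ?r" "S mu" "[St ?t]" "[St mu]"] b4 False by simp
    thus ?thesis using A False e_trans by simp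
  qed
qed

lemma M2: assumes "nu \<in> paths G" "mu \<in> paths G" "deg G mu \<le> deg G nu"
  shows "TMul (C mu) (S nu) \<approx> (if pre nu (deg G mu) = mu then S nu else TZero)"
proof -
  note f = fac[OF assms(1) assms(3)]
  let ?r = "pre nu (deg G mu)" and ?t = "suf nu (deg G mu)"
  have sn: "TMul (S ?r) (S ?t) \<approx> S nu" using B2[OF f(1,2,3)] f(6) by simp
  have "TMul (C mu) (S nu) \<approx> TMul (C mu) (TMul (S ?r) (S ?t))" by (rule mul_cong_r, rule e_sym, rule sn)
  also have "\<dots> \<approx> pl [S mu, St mu, S ?r, S ?t]" by (rule pl_2_2)
  finally have A: "TMul (C mu) (S nu) \<approx> pl [S mu, St mu, S ?r, S ?t]" .
  note b4 = B4[OF assms(2) f(1)] f(4)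
  show ?thesis
  proof (cases "?r = mu")
    case True
    have rt: "rng G ?t = src G mu" using f(3) True by simp
    have "pl [S mu, St mu, S ?r, S ?t] \<approx> pl [S mu, Pp (src G mu), S ?t]"
      using contr[of "St mu" "S ?r" "Pp (src G mu)" "[S mu]" "[S ?t]"] b4 True by simp
    also have "\<dots> \<approx> pl [S mu, S ?t]"
      using contr[OF B1a[OF f(2)], of "[S mu]" "[]"] rt by simp
    also have "\<dots> \<approx> S nu" using sn True by simp
    finally show ?thesis using A True e_trans by simp
  next
    case False
    have "pl [S mu, St mu, S ?r, S ?t] \<approx> TZero"
      using contr0[of "St mu" "S ?r" "[S mu]" "[S ?t]"] b4 False by auto
    thus ?thesis using A False e_trans by simp
  qed
qed

lemma Nrm: assumes "l \<in> paths G" "m \<in> paths G" "src G l = src G m"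
  shows "TMul (TMul (S l) (St m)) (TMul (S m) (St l)) \<approx> C l"
proof -
  have "TMul (TMul (S l) (St m)) (TMul (S m) (St l)) \<approx> pl [S l, St m, S m, St l]"
    by (rule pl_2_2)
  also have "\<dots> \<approx> pl [S l, Pp (src G m), St l]"
    using contr[of "St m" "S m" "Pp (src G m)" "[S l]" "[St l]"] B4[OF assms(2) assms(2)] by simp
  also have "\<dots> \<approx> pl [S l, St l]"
    using contr[OF B1c[OF assms(1)], of "[S l]" "[]"] assms(3) by simp
  finally show ?thesis by simp
qed

lemma La: assumes "b \<in> paths G" "g \<in> paths G" "src G b = rng G g"
  shows "TMul (St b) (S (comp G b g)) \<approx> S g"
proof -
  have "TMul (St b) (S (comp G b g)) \<approx> TMul (St b) (TMul (S b) (S g))"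
    by (rule mul_cong_r, rule e_sym, rule B2[OF assms])
  also have "\<dots> = pl [St b, S b, S g]" by simp
  also have "\<dots> \<approx> pl [Pp (src G b), S g]"
    using contr[of "St b" "S b" "Pp (src G b)" "[]" "[S g]"] B4[OF assms(1) assms(1)] by simp
  also have "\<dots> \<approx> S g" using B1a[OF assms(2)] assms(3) by simp
  finally show ?thesis .
qed

lemma Lb: assumes "b \<in> paths G" "g \<in> paths G" "src G b = rng G g"
  shows "TMul (St (comp G b g)) (S b) \<approx> St g"
proof -
  have "TMul (St (comp G b g)) (S b) \<approx> TMul (TMul (St g) (St b)) (S b)"
    by (rule mul_cong_l, rule e_sym, rule B3[OF assms])
  also have "\<dots> \<approx> pl [St g, St b, S b]" by (rule pl_2_1)
  also have "\<dots> \<approx> pl [St g, Pp (src G b)]"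
    using contr[of "St b" "S b" "Pp (src G b)" "[St g]" "[]"] B4[OF assms(1) assms(1)] by simp
  also have "\<dots> \<approx> St g" using B1d[OF assms(2)] assms(3) by simp
  finally show ?thesis .
qed

end
end



context kg begin

lemma tsum_perm_map: "distinct ts \<Longrightarrow> distinct us \<Longrightarrow> set ts = set us \<Longrightarrow> tsum_list (map f ts) \<approx> tsum_list (map f us)"
proof (induction ts arbitrary: us)
  case Nil thus ?case by simp
next
  case (Cons t ts)
  have "t \<in> set (t # ts)" by simp
  hence "t \<in> set us" unfolding Cons.prems(3) .
  then obtain u1 u2 where us: "us = u1 @ t # u2" by (meson split_list)
  have d: "t \<notin> set ts" "distinct ts" using Cons.prems(1) by auto
  have "set ts = insert t (set ts) - {t}" using d by simp
  also have "\<dots> = set us - {t}" using Cons.prems(3) by simp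
  also have "set us - {t} = set (u1 @ u2)" using Cons.prems(2) unfolding us by auto
  finally have e: "set ts = set (u1 @ u2)" .
  have dd: "distinct (u1 @ u2)" using Cons.prems(2) unfolding us by simp
  have ih: "tsum_list (map f ts) \<approx> tsum_list (map f (u1 @ u2))" by (rule Cons.IH[OF d(2) dd e])
  have "tsum_list (map f (t # ts)) \<approx> TAdd (f t) (tsum_list (map f (u1 @ u2)))"
    unfolding list.map tsum_list.simps by (rule add_cong[OF e_refl ih])
  also have "\<dots> \<approx> tsum_list (map f us)" unfolding us map_append list.map by (rule e_sym, rule tsum_mv)
  finally show ?case .
qed

lemma P3_sym: "P3 al be \<Longrightarrow> src G al = src G be \<Longrightarrow> P3 be al" unfolding P3_def by auto

lemma exlist: assumes "v \<in> verts G" "n \<in> Nk k"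
  shows "\<exists>xs. distinct xs \<and> set xs = {l\<in>paths G. rng G l = v \<and> deg G l = n}"
  using finite_distinct_list[OF rf_fin(1)[OF assms]] by metis

lemma INC: assumes "P3 al be" "al \<in> paths G" "be \<in> paths G" "src G al = src G be"
  "g \<in> paths G" "rng G g = src G al" "d \<in> paths G" "rng G d = src G g" "deg G d = deg G (comp G be g)"
  shows "\<exists>d'. d' \<in> paths G \<and> rng G d' = src G g \<and> deg G d' = deg G (comp G al g) \<and>
      comp G (comp G al g) d = comp G (comp G be g) d'"
proof -
  let ?l = "comp G al g" and ?m = "comp G be g"
  have lm: "?l \<in> paths G" "?m \<in> paths G" "src G ?l = src G g" "src G ?m = src G g"
    "deg G ?l = deg G al + deg G g" "deg G ?m = deg G be + deg G g"
    using comp_in assms by auto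
  have gd: "comp G g d \<in> paths G" "rng G (comp G g d) = src G al" "deg G (comp G g d) = deg G g + deg G d"
    using comp_in assms by auto
  let ?nu = "comp G ?l d"
  have nu: "?nu \<in> paths G" "deg G ?nu = deg G ?l + deg G d" using comp_in lm assms by auto
  have e1: "?nu = comp G al (comp G g d)" using comp_assoc assms by simp
  have e2: "comp G be (comp G g d) = comp G ?m d" using comp_assoc assms by simp
  have le1: "deg G ?m \<le> deg G al + deg G (comp G g d)" using gd lm assms
    by (simp add: le_fun_def)
  have le2: "deg G ?m \<le> deg G be + deg G (comp G g d)" using gd lm by (simp add: le_fun_def)
  have "pre ?nu (deg G ?m) = pre (comp G be (comp G g d)) (deg G ?m)"
    using K[OF assms(1-4) gd(1) gd(2) le1 le2] e1 by simp
  also have "\<dots> = ?m" using e2 fac_unique(1)[OF lm(2) assms(7)] lm assms by simp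
  finally have p: "pre ?nu (deg G ?m) = ?m" .
  have le: "deg G ?m \<le> deg G ?nu" using nu assms lm by (simp add: le_fun_def)
  note f = fac[OF nu(1) le]
  show ?thesis
  proof (intro exI conjI)
    show "suf ?nu (deg G ?m) \<in> paths G" using f by simp
    show "rng G (suf ?nu (deg G ?m)) = src G g" using f p lm by simp
    show "deg G (suf ?nu (deg G ?m)) = deg G ?l" using f nu assms fa_add_diff2 by simp
    show "?nu = comp G ?m (suf ?nu (deg G ?m))" using f p by simp
  qed
qed

lemma kp_star_sT: "kp_star (sT G l) = sstT G l" by (simp add: sT_def sstT_def)
lemma kp_star_sstT: "kp_star (sstT G l) = sT G l" by (simp add: sT_def sstT_def)

context fixes dummy :: "'r::comm_ring_1" begin

lemma L2: assumes "P3 al be" "al \<in> paths G" "be \<in> paths G" "src G al = src G be"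
  "g \<in> paths G" "rng G g = src G al"
  shows "C (comp G al g) \<approx> C (comp G be g)"
proof -
  let ?l = "comp G al g" and ?m = "comp G be g"
  have lm: "?l \<in> paths G" "?m \<in> paths G" "src G ?l = src G g" "src G ?m = src G g"
    using comp_in assms by auto
  have sg: "src G g \<in> verts G" using src_in assms by simp
  obtain xs where xs: "distinct xs" "set xs = {d\<in>paths G. rng G d = src G g \<and> deg G d = deg G ?m}"
    using exlist[OF sg deg_in[OF lm(2)]] by blast
  obtain ys where ys: "distinct ys" "set ys = {d\<in>paths G. rng G d = src G g \<and> deg G d = deg G ?l}"
    using exlist[OF sg deg_in[OF lm(1)]] by blast
  have xs2: "set xs = {d\<in>paths G. rng G d = src G ?l \<and> deg G d = deg G ?m}" using xs(2) lm(3) by simp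
  have ys2: "set ys = {d\<in>paths G. rng G d = src G ?m \<and> deg G d = deg G ?l}" using ys(2) lm(4) by simp
  have "C ?l \<approx> tsum_list (map (\<lambda>d. C (comp G ?l d)) xs)"
    by (rule E2[OF lm(1) lm(1) HOL.refl deg_in[OF lm(2)] xs(1) xs2])
  also have "\<dots> = tsum_list (map C (map (comp G ?l) xs))" by (induct xs) simp_all
  also have "\<dots> \<approx> tsum_list (map C (map (comp G ?m) ys))"
  proof (rule tsum_perm_map)
    show "distinct (map (comp G ?l) xs)" unfolding distinct_map
    proof
      show "distinct xs" by (rule xs(1))
      show "inj_on (comp G ?l) (set xs)"
      proof (rule inj_onI)
        fix x y assume x: "x \<in> set xs" and y: "y \<in> set xs" and e: "comp G ?l x = comp G ?l y"
        have x': "x \<in> paths G" "src G ?l = rng G x" using x xs2 by auto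
        have y': "y \<in> paths G" "src G ?l = rng G y" using y xs2 by auto
        have "x = suf (comp G ?l x) (deg G ?l)" using fac_unique(2)[OF lm(1) x'] by simp
        also have "\<dots> = suf (comp G ?l y) (deg G ?l)" using e by simp
        also have "\<dots> = y" using fac_unique(2)[OF lm(1) y'] by simp
        finally show "x = y" .
      qed
    qed
    show "distinct (map (comp G ?m) ys)" unfolding distinct_map
    proof
      show "distinct ys" by (rule ys(1))
      show "inj_on (comp G ?m) (set ys)"
      proof (rule inj_onI)
        fix x y assume x: "x \<in> set ys" and y: "y \<in> set ys" and e: "comp G ?m x = comp G ?m y"
        have x': "x \<in> paths G" "src G ?m = rng G x" using x ys2 by auto
        have y': "y \<in> paths G" "src G ?m = rng G y" using y ys2 by auto
        have "x = suf (comp G ?m x) (deg G ?m)" using fac_unique(2)[OF lm(2) x'] by simp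
        also have "\<dots> = suf (comp G ?m y) (deg G ?m)" using e by simp
        also have "\<dots> = y" using fac_unique(2)[OF lm(2) y'] by simp
        finally show "x = y" .
      qed
    qed
    show "set (map (comp G ?l) xs) = set (map (comp G ?m) ys)"
    proof
      show "set (map (comp G ?l) xs) \<subseteq> set (map (comp G ?m) ys)"
      proof
        fix nu assume "nu \<in> set (map (comp G ?l) xs)"
        then obtain d where d: "d \<in> set xs" "nu = comp G ?l d" by auto
        have dd: "d \<in> paths G" "rng G d = src G g" "deg G d = deg G ?m" using d xs by auto
        obtain d' where d': "d' \<in> paths G \<and> rng G d' = src G g \<and> deg G d' = deg G ?l" "comp G ?l d = comp G ?m d'"
          using INC[OF assms(1-6) dd] by blast
        have "d' \<in> set ys" using d'(1) ys(2) by simp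
        hence "comp G ?m d' \<in> set (map (comp G ?m) ys)" by simp
        thus "nu \<in> set (map (comp G ?m) ys)" using d(2) d'(2) by simp
      qed
      show "set (map (comp G ?m) ys) \<subseteq> set (map (comp G ?l) xs)"
      proof
        fix nu assume "nu \<in> set (map (comp G ?m) ys)"
        then obtain d where d: "d \<in> set ys" "nu = comp G ?m d" by auto
        have dd: "d \<in> paths G" "rng G d = src G g" "deg G d = deg G ?l" using d ys by auto
        have a2: "rng G g = src G be" using assms by simp
        obtain d' where d': "d' \<in> paths G \<and> rng G d' = src G g \<and> deg G d' = deg G ?m" "comp G ?m d = comp G ?l d'"
          using INC[OF P3_sym[OF assms(1,4)] assms(3) assms(2) assms(4)[symmetric] assms(5) a2 dd] by blast
        have "d' \<in> set xs" using d'(1) xs(2) by simp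
        hence "comp G ?l d' \<in> set (map (comp G ?l) xs)" by simp
        thus "nu \<in> set (map (comp G ?l) xs)" using d(2) d'(2) by simp
      qed
    qed
  qed
  also have "\<dots> = tsum_list (map (\<lambda>d. C (comp G ?m d)) ys)" by (induct ys) simp_all
  also have "\<dots> \<approx> C ?m"
    by (rule e_sym, rule E2[OF lm(2) lm(2) HOL.refl deg_in[OF lm(1)] ys(1) ys2])
  finally show ?thesis .
qed

end
end



context kg begin
context fixes dummy :: "'r::comm_ring_1" begin

abbreviation Sr :: "'a \<Rightarrow> ('v, 'a, 'r) kpterm" where "Sr l \<equiv> sT G l"
abbreviation Str :: "'a \<Rightarrow> ('v, 'a, 'r) kpterm" where "Str l \<equiv> sstT G l"
abbreviation Cr :: "'a \<Rightarrow> ('v, 'a, 'r) kpterm" where "Cr l \<equiv> TMul (sT G l) (sstT G l)"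
abbreviation Zr :: "('v, 'a, 'r) kpterm" where "Zr \<equiv> TZero"

lemma L4: assumes "P3 al be" "al \<in> paths G" "be \<in> paths G" "src G al = src G be" "mu \<in> paths G"
  shows "TMul (TMul (Sr al) (Str be)) (Cr mu) \<approx> TMul (Cr mu) (TMul (Sr al) (Str be))"
proof -
  have sa: "src G al \<in> verts G" using src_in assms by simp
  obtain xs where xs: "distinct xs" "set xs = {d\<in>paths G. rng G d = src G al \<and> deg G d = deg G mu}"
    using exlist[OF sa deg_in[OF assms(5)]] by blast
  let ?c = "\<lambda>g. pre (comp G al g) (deg G mu) = mu"
  let ?f = "\<lambda>g. if ?c g then TMul (Sr (comp G al g)) (Str (comp G be g)) else Zr"
  have A: "TMul (Sr al) (Str be) \<approx> tsum_list (map (\<lambda>d. TMul (Sr (comp G al d)) (Str (comp G be d))) xs)"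
    by (rule E2[OF assms(2,3,4) deg_in[OF assms(5)] xs])
  have gfacts: "\<And>g. g \<in> set xs \<Longrightarrow> g \<in> paths G \<and> rng G g = src G al \<and> deg G g = deg G mu"
    using xs by auto
  have "TMul (TMul (Sr al) (Str be)) (Cr mu) \<approx> TMul (tsum_list (map (\<lambda>d. TMul (Sr (comp G al d)) (Str (comp G be d))) xs)) (Cr mu)"
    by (rule mul_cong_l[OF A])
  also have "\<dots> \<approx> tsum_list (map (\<lambda>t. TMul t (Cr mu)) (map (\<lambda>d. TMul (Sr (comp G al d)) (Str (comp G be d))) xs))"
    by (rule tsum_mul_r)
  also have "\<dots> = tsum_list (map (\<lambda>d. TMul (TMul (Sr (comp G al d)) (Str (comp G be d))) (Cr mu)) xs)"
    by (induct xs) simp_all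
  also have "\<dots> \<approx> tsum_list (map ?f xs)"
  proof (rule tsum_cong)
    fix g assume "g \<in> set xs"
    hence g: "g \<in> paths G" "rng G g = src G al" "deg G g = deg G mu" using gfacts by auto
    have bg: "comp G be g \<in> paths G" "deg G (comp G be g) = deg G be + deg G mu" using comp_in g assms by auto
    have ag: "deg G (comp G al g) = deg G al + deg G mu" using g assms by auto
    have le: "deg G mu \<le> deg G (comp G be g)" using bg fa_le_add2 by simp
    have cc: "?c g \<longleftrightarrow> pre (comp G be g) (deg G mu) = mu"
      using K[OF assms(1-4) g(1) g(2)] g ag bg fa_le_add2 by simp
    have "TMul (TMul (Sr (comp G al g)) (Str (comp G be g))) (Cr mu) \<approx> TMul (Sr (comp G al g)) (TMul (Str (comp G be g)) (Cr mu))"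
      by (rule massoc)
    also have "\<dots> \<approx> TMul (Sr (comp G al g)) (if pre (comp G be g) (deg G mu) = mu then Str (comp G be g) else Zr)"
      by (rule mul_cong_r, rule M1[OF bg(1) assms(5) le])
    also have "\<dots> \<approx> ?f g" using cc by (auto simp: mul_zero_r)
    finally show "TMul (TMul (Sr (comp G al g)) (Str (comp G be g))) (Cr mu) \<approx> ?f g" .
  qed
  finally have L: "TMul (TMul (Sr al) (Str be)) (Cr mu) \<approx> tsum_list (map ?f xs)" .
  have "TMul (Cr mu) (TMul (Sr al) (Str be)) \<approx> TMul (Cr mu) (tsum_list (map (\<lambda>d. TMul (Sr (comp G al d)) (Str (comp G be d))) xs))"
    by (rule mul_cong_r[OF A])
  also have "\<dots> \<approx> tsum_list (map (TMul (Cr mu)) (map (\<lambda>d. TMul (Sr (comp G al d)) (Str (comp G be d))) xs))"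
    by (rule tsum_mul_l)
  also have "\<dots> = tsum_list (map (\<lambda>d. TMul (Cr mu) (TMul (Sr (comp G al d)) (Str (comp G be d)))) xs)"
    by (induct xs) simp_all
  also have "\<dots> \<approx> tsum_list (map ?f xs)"
  proof (rule tsum_cong)
    fix g assume "g \<in> set xs"
    hence g: "g \<in> paths G" "rng G g = src G al" "deg G g = deg G mu" using gfacts by auto
    have agp: "comp G al g \<in> paths G" "deg G (comp G al g) = deg G al + deg G mu" using comp_in g assms by auto
    have le: "deg G mu \<le> deg G (comp G al g)" using agp fa_le_add2 by simp
    have "TMul (Cr mu) (TMul (Sr (comp G al g)) (Str (comp G be g))) \<approx> TMul (TMul (Cr mu) (Sr (comp G al g))) (Str (comp G be g))"
      by (rule e_sym, rule massoc)
    also have "\<dots> \<approx> TMul (if ?c g then Sr (comp G al g) else Zr) (Str (comp G be g))"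
      by (rule mul_cong_l, rule M2[OF agp(1) assms(5) le])
    also have "\<dots> \<approx> ?f g" by (auto simp: mul_zero_l)
    finally show "TMul (Cr mu) (TMul (Sr (comp G al g)) (Str (comp G be g))) \<approx> ?f g" .
  qed
  finally have R: "TMul (Cr mu) (TMul (Sr al) (Str be)) \<approx> tsum_list (map ?f xs)" .
  show ?thesis using L R e_sym e_trans by blast
qed

lemma Dcomm: assumes "\<And>m. m \<in> paths G \<Longrightarrow> TMul a (Cr m) \<approx> TMul (Cr m) a" "t \<in> kp_D G"
  shows "TMul a t \<approx> TMul t a"
  using assms(2)
proof (induction rule: kp_D.induct)
  case (gen m) thus ?case using assms(1) by simp
next
  case zero
  have "TMul a TZero \<approx> TZero" by (rule mul_zero_r)
  also have "TZero \<approx> TMul TZero a" by (rule e_sym, rule mul_zero_l)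
  finally show ?case .
next
  case (add x y)
  have "TMul a (TAdd x y) \<approx> TAdd (TMul a x) (TMul a y)" by (rule kp_eq.distrib_l)
  also have "\<dots> \<approx> TAdd (TMul x a) (TMul y a)" by (rule add_cong[OF add.IH])
  also have "\<dots> \<approx> TMul (TAdd x y) a" by (rule e_sym, rule kp_eq.distrib_r)
  finally show ?case .
next
  case (neg x)
  have "TMul a (TNeg x) \<approx> TNeg (TMul a x)" by (rule mul_neg_r)
  also have "\<dots> \<approx> TNeg (TMul x a)" by (rule kp_eq.cong_neg[OF neg.IH])
  also have "\<dots> \<approx> TMul (TNeg x) a" by (rule e_sym, rule mul_neg_l)
  finally show ?case .
next
  case (mul x y)
  have "TMul a (TMul x y) \<approx> TMul (TMul a x) y" by (rule e_sym, rule massoc)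
  also have "\<dots> \<approx> TMul (TMul x a) y" by (rule mul_cong_l[OF mul.IH(1)])
  also have "\<dots> \<approx> TMul x (TMul a y)" by (rule massoc)
  also have "\<dots> \<approx> TMul x (TMul y a)" by (rule mul_cong_r[OF mul.IH(2)])
  also have "\<dots> \<approx> TMul (TMul x y) a" by (rule e_sym, rule massoc)
  finally show ?case .
next
  case (smul x r)
  have "TMul a (TSmul r x) \<approx> TSmul r (TMul a x)" by (rule e_sym, rule kp_eq.smul_mul_r)
  also have "\<dots> \<approx> TSmul r (TMul x a)" by (rule kp_eq.cong_smul[OF smul.IH])
  also have "\<dots> \<approx> TMul (TSmul r x) a" by (rule kp_eq.smul_mul_l)
  finally show ?case .
qed

lemma two_to_one: assumes "al \<in> paths G" "be \<in> paths G" "src G al = src G be"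
  "Cr al \<approx> (Cr be )" "\<And>m. m \<in> paths G \<Longrightarrow> TMul (TMul (Sr al) (Str be)) (Cr m) \<approx> TMul (Cr m) (TMul (Sr al) (Str be))"
  "g \<in> paths G" "rng G g = src G al"
  shows "Cr (comp G al g) \<approx> (Cr (comp G be g) )"
proof -
  let ?a = "TMul (Sr al) (Str be) " and ?as = "TMul (Sr be) (Str al) " and ?bg = "comp G be g"
  have g2: "src G be = rng G g" using assms by simp
  have g1: "src G al = rng G g" using assms by simp
  have bg: "?bg \<in> paths G" using comp_in assms g2 by simp
  let ?X = "TMul (TMul ?a (Cr ?bg)) ?as"
  have "?X \<approx> pl [Sr al, Str be, Sr ?bg, Str ?bg, Sr be, Str al]" by (rule pl_2_2_2)
  also have "\<dots> \<approx> pl [Sr al, Sr g, Str ?bg, Sr be, Str al]"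
    using contr[OF La[OF assms(2) assms(6) g2], of "[Sr al]" "[Str ?bg, Sr be, Str al]"] by simp
  also have "\<dots> \<approx> pl [Sr al, Sr g, Str g, Str al]"
    using contr[OF Lb[OF assms(2) assms(6) g2], of "[Sr al, Sr g]" "[Str al]"] by simp
  also have "\<dots> \<approx> pl [Sr (comp G al g), Str g, Str al]"
    using contr[OF B2[OF assms(1) assms(6) g1], of "[]" "[Str g, Str al]"] by simp
  also have "\<dots> \<approx> pl [Sr (comp G al g), Str (comp G al g)]"
    using contr[OF B3[OF assms(1) assms(6) g1], of "[Sr (comp G al g)]" "[]"] by simp
  finally have X1: "?X \<approx> Cr (comp G al g)" by simp
  have "?X \<approx> TMul (TMul (Cr ?bg) ?a) ?as" by (rule mul_cong_l[OF assms(5)[OF bg]])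
  also have "\<dots> \<approx> TMul (Cr ?bg) (TMul ?a ?as)" by (rule massoc)
  also have "\<dots> \<approx> TMul (Cr ?bg) (Cr al)" by (rule mul_cong_r, rule Nrm[OF assms(1,2,3)])
  also have "\<dots> \<approx> TMul (Cr ?bg) (Cr be)" by (rule mul_cong_r, rule assms(4))
  also have "\<dots> \<approx> pl [Sr ?bg, Str ?bg, Sr be, Str be]" by (rule pl_2_2)
  also have "\<dots> \<approx> pl [Sr ?bg, Str g, Str be]"
    using contr[OF Lb[OF assms(2) assms(6) g2], of "[Sr ?bg]" "[Str be]"] by simp
  also have "\<dots> \<approx> pl [Sr ?bg, Str ?bg]"
    using contr[OF B3[OF assms(2) assms(6) g2], of "[Sr ?bg]" "[]"] by simp
  finally have X2: "?X \<approx> Cr ?bg" by simp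
  show ?thesis using X1 X2 e_sym e_trans by blast
qed

lemma main: assumes "al \<in> paths G" "be \<in> paths G" "src G al = src G be"
  shows "((\<forall>g\<in>paths G. rng G g = src G al \<longrightarrow> Cr (comp G al g) \<approx> (Cr (comp G be g) ))
          \<longleftrightarrow>
          (TMul (TMul (Sr al) (Str be)) (kp_star (TMul (Sr al) (Str be))) \<approx> TMul (kp_star (TMul (Sr al) (Str be))) (TMul (Sr al) (Str be)) \<and>
           (\<forall>t\<in>kp_D G. TMul (TMul (Sr al) (Str be)) t \<approx> TMul t (TMul (Sr al) (Str be)))))
       \<and>
         ((TMul (TMul (Sr al) (Str be)) (kp_star (TMul (Sr al) (Str be))) \<approx> TMul (kp_star (TMul (Sr al) (Str be))) (TMul (Sr al) (Str be)) \<and>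
           (\<forall>t\<in>kp_D G. TMul (TMul (Sr al) (Str be)) t \<approx> TMul t (TMul (Sr al) (Str be))))
          \<longleftrightarrow>
          (\<forall>x. inf_path k G x \<and> inf_rng G x = src G al \<longrightarrow>
             inf_eq k (inf_concat k G al x) (inf_concat k G be x)))"
proof -
  let ?a = "TMul (Sr al) (Str be) "
  have st: "kp_star ?a = TMul (Sr be) (Str al)" by (simp add: kp_star_sT kp_star_sstT)
  have N1: "TMul ?a (kp_star ?a) \<approx> Cr al" unfolding st by (rule Nrm[OF assms])
  have N2: "TMul (kp_star ?a) ?a \<approx> Cr be" unfolding st by (rule Nrm[OF assms(2,1) assms(3)[symmetric]])
  let ?I1 = "\<forall>g\<in>paths G. rng G g = src G al \<longrightarrow> Cr (comp G al g) \<approx> (Cr (comp G be g) )"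
  let ?I2 = "TMul ?a (kp_star ?a) \<approx> TMul (kp_star ?a) ?a \<and> (\<forall>t\<in>kp_D G. TMul ?a t \<approx> TMul t ?a)"
  let ?I3 = "\<forall>x. inf_path k G x \<and> inf_rng G x = src G al \<longrightarrow>
             inf_eq k (inf_concat k G al x) (inf_concat k G be x)"
  have id: "ident G (src G al) \<in> paths G" "rng G (ident G (src G al)) = src G al"
    "comp G al (ident G (src G al)) = al" "comp G be (ident G (src G al)) = be"
    using ident_in[OF src_in[OF assms(1)]] ident_rng[OF src_in[OF assms(1)]] comp_id_r[OF assms(1)]
      comp_id_r[OF assms(2)] assms(3) by simp_all
  have I1P3: "?I1 \<Longrightarrow> P3 al be" by (rule one_to_P3[OF assms])
  have P3I1: "P3 al be \<Longrightarrow> ?I1" using L2[OF _ assms] by blast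
  have I1I2: "?I1 \<Longrightarrow> ?I2"
  proof -
    assume h: ?I1
    have cab: "Cr al \<approx> Cr be" using h id by metis
    have nrm: "TMul ?a (kp_star ?a) \<approx> TMul (kp_star ?a) ?a"
      using N1 cab N2 e_sym e_trans by blast
    have p3: "P3 al be" by (rule I1P3[OF h])
    have "\<forall>t\<in>kp_D G. TMul ?a t \<approx> TMul t ?a"
    proof
      fix t :: "('v,'a,'r) kpterm" assume t: "t \<in> kp_D G"
      show "TMul ?a t \<approx> TMul t ?a" by (rule Dcomm[OF L4[OF p3 assms] t])
    qed
    thus ?I2 using nrm by blast
  qed
  have I2I1: "?I2 \<Longrightarrow> ?I1"
  proof -
    assume h: ?I2
    have cab: "Cr al \<approx> Cr be" using N1 N2 h e_sym e_trans by blast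
    have comm: "\<And>m. m \<in> paths G \<Longrightarrow> TMul ?a (Cr m) \<approx> TMul (Cr m) ?a"
    proof -
      fix m assume "m \<in> paths G"
      hence "Cr m \<in> kp_D G" by (rule kp_D.gen)
      thus "TMul ?a (Cr m) \<approx> TMul (Cr m) ?a" using h by blast
    qed
    show ?I1 using two_to_one[OF assms cab comm] by blast
  qed
  have I13: "?I1 \<longleftrightarrow> ?I3" using I1P3 P3I1 P3_iff[OF assms] by blast
  show ?thesis using I1I2 I2I1 I13 by blast
qed

end
end



context kg begin

lemma main13: assumes "al \<in> paths G" "be \<in> paths G" "src G al = src G be"
  shows "(\<forall>g\<in>paths G. rng G g = src G al \<longrightarrow>
             kp_eq k G (TMul (sT G (comp G al g)) (sstT G (comp G al g)))
                       (TMul (sT G (comp G be g)) (sstT G (comp G be g)) :: ('v, 'a, 'r::comm_ring_1) kpterm))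
    \<longleftrightarrow> (\<forall>x. inf_path k G x \<and> inf_rng G x = src G al \<longrightarrow>
             inf_eq k (inf_concat k G al x) (inf_concat k G be x))"
proof -
  note m = main[where 'r='r, OF assms]
  show ?thesis using m by blast
qed

lemma main23: assumes "al \<in> paths G" "be \<in> paths G" "src G al = src G be"
  shows "(kp_eq k G (TMul (TMul (sT G al) (sstT G be)) (kp_star (TMul (sT G al) (sstT G be))))
            (TMul (kp_star (TMul (sT G al) (sstT G be))) (TMul (sT G al) (sstT G be) :: ('v, 'a, 'r::comm_ring_1) kpterm)) \<and>
           (\<forall>t\<in>(kp_D G :: ('v, 'a, 'r) kpterm set). kp_eq k G (TMul (TMul (sT G al) (sstT G be)) t) (TMul t (TMul (sT G al) (sstT G be)))))
    \<longleftrightarrow> (\<forall>x. inf_path k G x \<and> inf_rng G x = src G al \<longrightarrow>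
             inf_eq k (inf_concat k G al x) (inf_concat k G be x))"
proof -
  note m = main[where 'r='r, OF assms]
  show ?thesis using m by blast
qed

end

lemma combine_iff: "(A \<longleftrightarrow> C) \<Longrightarrow> (B \<longleftrightarrow> C) \<Longrightarrow> (A \<longleftrightarrow> B) \<and> (B \<longleftrightarrow> C)" by blast

theorem proposition4p1:
  fixes k :: nat and G :: "('v, 'a) kgraph" and \<alpha> \<beta> :: 'a
  assumes "is_kgraph k G" and "row_finite_no_sources k G"
    and "\<alpha> \<in> paths G" and "\<beta> \<in> paths G" and "src G \<alpha> = src G \<beta>"
  defines "a \<equiv> (TMul (sT G \<alpha>) (sstT G \<beta>) :: ('v, 'a, 'r::comm_ring_1) kpterm)"
  shows "((\<forall>\<gamma>\<in>paths G. rng G \<gamma> = src G \<alpha> \<longrightarrow>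
             kp_eq k G (TMul (sT G (comp G \<alpha> \<gamma>)) (sstT G (comp G \<alpha> \<gamma>)))
                       (TMul (sT G (comp G \<beta> \<gamma>)) (sstT G (comp G \<beta> \<gamma>))))
          \<longleftrightarrow>
          (kp_eq k G (TMul a (kp_star a)) (TMul (kp_star a) a) \<and>
           (\<forall>t\<in>kp_D G. kp_eq k G (TMul a t) (TMul t a))))
       \<and>
         ((kp_eq k G (TMul a (kp_star a)) (TMul (kp_star a) a) \<and>
           (\<forall>t\<in>kp_D G. kp_eq k G (TMul a t) (TMul t a)))
          \<longleftrightarrow>
          (\<forall>\<gamma>. inf_path k G \<gamma> \<and> inf_rng G \<gamma> = src G \<alpha> \<longrightarrow>
             inf_eq k (inf_concat k G \<alpha> \<gamma>) (inf_concat k G \<beta> \<gamma>)))"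
proof -
  interpret kg k G by (rule kg.intro[OF assms(1) assms(2)])
  show ?thesis unfolding a_def
    by (rule combine_iff, rule main13[OF assms(3,4,5)], rule main23[OF assms(3,4,5)])
qed


end
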